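(* Let $(u_{h,\tau},v_{h,\tau})\in\mathring{\mathcal V}_{h,\tau}^{p,q}\times\mathring{\mathcal V}_{h,\tau}^{p,q}$ solve $$(c^2\nabla v_{h,\tau},\nabla z)_{Q_T}-(c^2\nabla\partial_t u_{h,\tau},\nabla z)_{Q_T}=0,\qquad(\partial_t v_{h,\tau},w)_{Q_T}+(c^2\nabla u_{h,\tau},\nabla w)_{Q_T}=(f,w)_{Q_T}$$ for all $z,w\in\mathring{\mathcal W}_{h,\tau}^{p,q-1}$, with prescribed initial values $u_{h,\tau}(\cdot,0)=u_{0,h}\in\mathring{\mathcal V}_h^p$, $v_{h,\tau}(\cdot,0)=v_{0,h}\in\mathring{\mathcal V}_h^p$, and let $u^\star_{h,\tau}(\cdot,t)=u_{h,\tau}(\cdot,0)+\int_0^t v_{h,\tau}(\cdot,s)\,ds$, so that $u^\star_{h,\tau}\in\mathring{\mathcal V}_{h,\tau}^{p,q+1}$. Then, for $n=1,\dots,N$: (i) if $q>1$, $(u^\star_{h,\tau}-u_{h,\tau},w_{h,\tau})_{Q_n}=0$ for all $w_{h,\tau}\in\mathbb P^{q-2}(I_n)\otimes\mathring{\mathcal V}_h^p$; (ii) $\|u^\star_{h,\tau}-u_{h,\tau}\|_{L^\infty(I_n;L^2(\Omega))}\le\sqrt{C_{q,\star}\tau_n}\,\|(\mathrm{Id}-\Pi_{q-1}^t)v_{h,\tau}\|_{L^2(Q_n)}$; (iii) $\|u^\star_{h,\tau}-u_{h,\tau}\|_{L^1(I_n;L^2(\Omega))}\le\tau_n\|(\mathrm{Id}-\Pi_{q-1}^t)v_{h,\tau}\|_{L^1(I_n;L^2(\Omega))}$,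 where $C_{q,\star}=1/\pi$ if $q=1$ and $C_{q,\star}=\frac{1}{2\sqrt{(q-1)q}}$ if $q>1$.
   Context: Let $\Omega\subset\mathbb R^d$, $d\in\{1,2,3\}$, be a polytopic domain, $T>0$, $Q_T=\Omega\times(0,T)$, $c\in C^0(\overline\Omega)$ with $0<c_\star<c(x)<c^\star$, and $f\in L^1(0,T;L^2(\Omega))$ (homogeneous Dirichlet boundary conditions). Let $\mathcal T_h$ be a shape-regular conforming simplicial mesh of $\Omega$ and $0=t_0<\dots<t_N=T$ a partition with $I_n=(t_{n-1},t_n)$, $\tau_n=t_n-t_{n-1}$, $Q_n=\Omega\times I_n$. Fix integers $p,q\ge1$. $\mathcal V_h^p=\{v\in H^1(\Omega):v|_K\in\mathbb P^p(K)\ \forall K\}$, $\mathring{\mathcal V}_h^p=\mathcal V_h^p\cap H^1_0(\Omega)$, $\mathring{\mathcal V}_{h,\tau}^{p,k}=\{v\in C^0([0,T];H^1_0(\Omega)):v|_{Q_n}\in\mathbb P^k(I_n)\otimes\mathring{\mathcal V}_h^p\}$, $\mathring{\mathcal W}_{h,\tau}^{p,q-1}=\{w\in L^2(0,T;H^1_0(\Omega)):w|_{Q_n}\in\mathbb P^{q-1}(I_n)\otimes\mathring{\mathcal V}_h^p\}$ ($\otimes$ = span of products); $(\cdot,\cdot)_D$ is the $L^2(D)$ inner product. $\Pi_{q-1}^t$ is the $L^2(0,T)$-orthogonal projection onto (possibly discontinuous) piecewise polynomials of degree $\le q-1$ on the partition, applied pointwise in space. *)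

theory Defs
  imports "HOL-Analysis.Analysis" "HOL-Computational_Algebra.Polynomial"
          "HOL-Probability.Essential_Supremum"
begin

definition poly_fun_le :: "nat \<Rightarrow> ('a::euclidean_space \<Rightarrow> real) \<Rightarrow> bool" where
  "poly_fun_le p P \<longleftrightarrow>
     (\<exists>(A :: ('a \<Rightarrow> nat) set) (c :: ('a \<Rightarrow> nat) \<Rightarrow> real).
        finite A \<and> (\<forall>\<alpha>\<in>A. (\<Sum>i\<in>Basis. \<alpha> i) \<le> p) \<and>
        P = (\<lambda>x. \<Sum>\<alpha>\<in>A. c \<alpha> * (\<Prod>i\<in>Basis. (x \<bullet> i) ^ (\<alpha> i))))"

definition conforming_simplicial_mesh :: "'a::euclidean_space set \<Rightarrow> 'a set set \<Rightarrow> bool" where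
  "conforming_simplicial_mesh \<Omega> Th \<longleftrightarrow>
     finite Th \<and> (\<forall>K\<in>Th. (int DIM('a)) simplex K) \<and> \<Union>Th = closure \<Omega> \<and>
     (\<forall>K\<in>Th. \<forall>K'\<in>Th. (K \<inter> K') face_of K \<and> (K \<inter> K') face_of K')"

definition polytopic_domain :: "'a::euclidean_space set \<Rightarrow> bool" where
  "polytopic_domain \<Omega> \<longleftrightarrow> open \<Omega> \<and> connected \<Omega> \<and> \<Omega> \<noteq> {} \<and> bounded \<Omega> \<and>
     (\<exists>Th. finite Th \<and> (\<forall>K\<in>Th. polytope K) \<and> \<Union>Th = closure \<Omega>)"

(* \<ring>V_h^p = V_h^p \<inter> H^1_0, functions represented as extended by zero outside Omega *)
definition Vh0 :: "'a::euclidean_space set \<Rightarrow> 'a set set \<Rightarrow> nat \<Rightarrow> ('a \<Rightarrow> real) set" where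
  "Vh0 \<Omega> Th p = {v. continuous_on UNIV v \<and> (\<forall>x. x \<notin> \<Omega> \<longrightarrow> v x = 0) \<and>
                      (\<forall>K\<in>Th. \<exists>P. poly_fun_le p P \<and> (\<forall>x\<in>K. v x = P x))}"

definition time_partition :: "(nat \<Rightarrow> real) \<Rightarrow> nat \<Rightarrow> real \<Rightarrow> bool" where
  "time_partition tn N T \<longleftrightarrow> N \<ge> 1 \<and> tn 0 = 0 \<and> tn N = T \<and> (\<forall>n<N. tn n < tn (Suc n))"

(* \<ring>V_{h,tau}^{p,k}: continuous in time, on each closed [t_{n-1},t_n] in P^k(I_n) \<otimes> \<ring>V_h^p *)
definition Vht :: "'a::euclidean_space set \<Rightarrow> 'a set set \<Rightarrow> nat \<Rightarrow> (nat \<Rightarrow> real) \<Rightarrow> nat \<Rightarrow> nat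
                     \<Rightarrow> ('a \<Rightarrow> real \<Rightarrow> real) set" where
  "Vht \<Omega> Th p tn N k = {u. \<forall>n\<in>{1..N}. \<exists>\<phi>. (\<forall>j\<le>k. \<phi> j \<in> Vh0 \<Omega> Th p) \<and>
        (\<forall>t\<in>{tn (n-1)..tn n}. \<forall>x. u x t = (\<Sum>j\<le>k. t ^ j * \<phi> j x))}"

(* \<ring>W_{h,tau}^{p,k}: on each open I_n in P^k(I_n) \<otimes> \<ring>V_h^p (discontinuous in time) *)
definition Wht :: "'a::euclidean_space set \<Rightarrow> 'a set set \<Rightarrow> nat \<Rightarrow> (nat \<Rightarrow> real) \<Rightarrow> nat \<Rightarrow> nat
                     \<Rightarrow> ('a \<Rightarrow> real \<Rightarrow> real) set" where
  "Wht \<Omega> Th p tn N k = {w. \<forall>n\<in>{1..N}. \<exists>\<phi>. (\<forall>j\<le>k. \<phi> j \<in> Vh0 \<Omega> Th p) \<and>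
        (\<forall>t\<in>{tn (n-1)<..<tn n}. \<forall>x. w x t = (\<Sum>j\<le>k. t ^ j * \<phi> j x))}"

definition grad :: "('a::euclidean_space \<Rightarrow> real) \<Rightarrow> 'a \<Rightarrow> 'a" where
  "grad g x = (\<Sum>i\<in>Basis. frechet_derivative g (at x) i *\<^sub>R i)"

definition dt :: "('a \<Rightarrow> real \<Rightarrow> real) \<Rightarrow> 'a \<Rightarrow> real \<Rightarrow> real" where
  "dt u x t = deriv (\<lambda>r. u x r) t"

definition QInt :: "'a::euclidean_space set \<Rightarrow> real \<Rightarrow> real \<Rightarrow> ('a \<Rightarrow> real \<Rightarrow> real) \<Rightarrow> real" where
  "QInt \<Omega> a b g = (LINT t:{a<..<b}|lborel. (LINT x:\<Omega>|lborel. g x t))"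

definition L2nrm :: "'a::euclidean_space set \<Rightarrow> ('a \<Rightarrow> real) \<Rightarrow> real" where
  "L2nrm \<Omega> g = sqrt (LINT x:\<Omega>|lborel. (g x)\<^sup>2)"

definition L1L2 :: "'a::euclidean_space set \<Rightarrow> real \<Rightarrow> ('a \<Rightarrow> real \<Rightarrow> real) \<Rightarrow> bool" where
  "L1L2 \<Omega> T f \<longleftrightarrow> case_prod f \<in> borel_measurable (lborel \<Otimes>\<^sub>M lborel) \<and>
     (AE t in lborel. t \<in> {0<..<T} \<longrightarrow> set_integrable lborel \<Omega> (\<lambda>x. (f x t)\<^sup>2)) \<and>
     set_integrable lborel {0<..<T} (\<lambda>t. L2nrm \<Omega> (\<lambda>x. f x t))"

definition tproj :: "nat \<Rightarrow> real \<Rightarrow> real \<Rightarrow> (real \<Rightarrow> real) \<Rightarrow> real \<Rightarrow> real" where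
  "tproj k a b g = poly (THE P. degree P \<le> k \<and>
       (\<forall>j\<le>k. (LINT r:{a<..<b}|lborel. (g r - poly P r) * r ^ j) = 0))"

definition Cqstar :: "nat \<Rightarrow> real" where
  "Cqstar q = (if q = 1 then 1 / pi else 1 / (2 * sqrt (real (q - 1) * real q)))"

end

theory Submission
  imports Defs
begin

definition pdq :: "('a::euclidean_space \<Rightarrow> real) \<Rightarrow> 'a \<Rightarrow> 'a \<Rightarrow> real" where
  "pdq f x b = real_of_ereal (limsup (\<lambda>k. ereal ((f (x + (1 / real (Suc k)) *\<^sub>R b) - f x) * real (Suc k))))"

definition Lq :: "('a::euclidean_space \<Rightarrow> real) \<Rightarrow> 'a \<Rightarrow> 'a \<Rightarrow> real" where
  "Lq f x h = (\<Sum>b\<in>Basis. (h \<bullet> b) * pdq f x b)"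

lemma pdq_meas:
  fixes f :: "'a::euclidean_space \<Rightarrow> real"
  assumes "continuous_on UNIV f"
  shows "(\<lambda>x. pdq f x b) \<in> borel_measurable borel"
proof -
  have fm[measurable]: "f \<in> borel_measurable borel"
    using assms by (simp add: borel_measurable_continuous_onI)
  show ?thesis unfolding pdq_def by measurable
qed

lemma Lq_meas:
  fixes f :: "'a::euclidean_space \<Rightarrow> real"
  assumes "continuous_on UNIV f" and "h \<in> borel_measurable borel"
  shows "(\<lambda>x. Lq f x (h x)) \<in> borel_measurable borel"
proof -
  have [measurable]: "(\<lambda>x. pdq f x b) \<in> borel_measurable borel" for b using pdq_meas[OF assms(1)] .
  have [measurable]: "h \<in> borel_measurable borel" by fact
  note assms(1)
  show ?thesis unfolding Lq_def by measurable
qed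

lemma pdq_deriv:
  fixes f :: "'a::euclidean_space \<Rightarrow> real"
  assumes "(f has_derivative F) (at x)"
  shows "pdq f x b = F b"
proof -
  let ?g = "\<lambda>s::real. f (x + s *\<^sub>R b)"
  have "((\<lambda>s. x + s *\<^sub>R b) has_derivative (\<lambda>s. s *\<^sub>R b)) (at 0)"
    by (auto intro!: derivative_eq_intros)
  moreover have "(f has_derivative F) (at (x + 0 *\<^sub>R b))" using assms by simp
  ultimately have "(?g has_derivative (\<lambda>s. F (s *\<^sub>R b))) (at 0)"
    using diff_chain_at[of "\<lambda>s. x + s *\<^sub>R b" _ 0 f F] by (simp add: o_def)
  moreover have "F (s *\<^sub>R b) = s * F b" for s
    using assms has_derivative_bounded_linear linear_scale bounded_linear.linear by fastforce
  ultimately have "(?g has_field_derivative F b) (at 0)"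
    by (simp add: has_field_derivative_def mult.commute[of _ "F b"])
  then have lim: "((\<lambda>s. (?g s - ?g 0) / (s - 0)) \<longlongrightarrow> F b) (at 0)"
    unfolding has_field_derivative_iff by simp
  have s0: "(\<lambda>k. 1 / real (Suc k)) \<longlonglongrightarrow> 0"
    using LIMSEQ_Suc[OF lim_const_over_n[of 1]] by simp
  have "\<forall>\<^sub>F k in sequentially. 1 / real (Suc k) \<noteq> 0" by simp
  with s0 have s0': "filterlim (\<lambda>k. 1 / real (Suc k)) (at 0) sequentially"
    by (simp add: filterlim_at)
  have "((\<lambda>k. (?g (1 / real (Suc k)) - ?g 0) / (1 / real (Suc k) - 0)) \<longlongrightarrow> F b) sequentially"
    using filterlim_compose[OF lim s0'] by (simp add: o_def)
  then have "((\<lambda>k. (f (x + (1 / real (Suc k)) *\<^sub>R b) - f x) * real (Suc k)) \<longlongrightarrow> F b) sequentially"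
    by simp
  then have "((\<lambda>k. ereal ((f (x + (1 / real (Suc k)) *\<^sub>R b) - f x) * real (Suc k))) \<longlongrightarrow> ereal (F b)) sequentially"
    by (simp add: tendsto_ereal)
  then have "limsup (\<lambda>k. ereal ((f (x + (1 / real (Suc k)) *\<^sub>R b) - f x) * real (Suc k))) = ereal (F b)"
    by (simp add: lim_imp_Limsup)
  then show ?thesis unfolding pdq_def by simp
qed

lemma Lq_deriv:
  fixes f :: "'a::euclidean_space \<Rightarrow> real"
  assumes "(f has_derivative F) (at x)"
  shows "Lq f x = F"
proof
  fix h
  have lin: "linear F" using assms has_derivative_linear by blast
  have "F h = F (\<Sum>b\<in>Basis. (h \<bullet> b) *\<^sub>R b)" by (simp add: euclidean_representation)
  also have "\<dots> = (\<Sum>b\<in>Basis. (h \<bullet> b) * F b)"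
    using lin by (simp add: linear_sum linear_scale)
  finally show "Lq f x h = F h" unfolding Lq_def using pdq_deriv[OF assms] by simp
qed

lemma Lq_bl: "bounded_linear (Lq f x)"
  unfolding Lq_def by (auto intro!: bounded_linear_intros)

lemma frechet_nondiff:
  assumes "\<not> f differentiable (at x)"
  shows "frechet_derivative f (at x) = (SOME f'. False)"
proof -
  have "(\<lambda>f'. (f has_derivative f') (at x)) = (\<lambda>f'. False)"
    using assms by (auto simp: differentiable_def)
  then show ?thesis unfolding frechet_derivative_def by metis
qed

lemma diff_char:
  fixes f :: "'a::euclidean_space \<Rightarrow> real" and C :: "'a set"
  assumes cont: "continuous_on UNIV f"
    and dense: "\<And>X. open X \<Longrightarrow> X \<noteq> {} \<Longrightarrow> \<exists>d\<in>C. d \<in> X"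
  shows "f differentiable (at x) \<longleftrightarrow>
    (\<forall>r::rat. r > 0 \<longrightarrow> (\<exists>s::rat. s > 0 \<and> (\<forall>y\<in>C. norm (y - x) < of_rat s \<longrightarrow>
        \<bar>f y - f x - Lq f x (y - x)\<bar> \<le> of_rat r * norm (y - x))))"
proof
  assume "f differentiable (at x)"
  then obtain F where F: "(f has_derivative F) (at x)" by (auto simp: differentiable_def)
  have L: "Lq f x = F" using Lq_deriv[OF F] .
  show "\<forall>r::rat. r > 0 \<longrightarrow> (\<exists>s::rat. s > 0 \<and> (\<forall>y\<in>C. norm (y - x) < of_rat s \<longrightarrow>
        \<bar>f y - f x - Lq f x (y - x)\<bar> \<le> of_rat r * norm (y - x)))"
  proof (intro allI impI)
    fix r :: rat assume "r > 0"
    then have "(of_rat r::real) > 0" by simp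
    then obtain d where d: "d > 0" "\<forall>y. norm (y - x) < d \<longrightarrow> norm (f y - f x - F (y - x)) \<le> of_rat r * norm (y - x)"
      using F unfolding has_derivative_at_alt by blast
    obtain s' where s': "s' \<in> \<rat>" "0 < s'" "s' < d" using Rats_dense_in_real[OF d(1)] by blast
    then obtain s where s: "s' = of_rat s" by (auto simp: Rats_def)
    show "\<exists>s::rat. s > 0 \<and> (\<forall>y\<in>C. norm (y - x) < of_rat s \<longrightarrow>
        \<bar>f y - f x - Lq f x (y - x)\<bar> \<le> of_rat r * norm (y - x))"
      using s s' d L by (intro exI[of _ s]) auto
  qed
next
  assume H: "\<forall>r::rat. r > 0 \<longrightarrow> (\<exists>s::rat. s > 0 \<and> (\<forall>y\<in>C. norm (y - x) < of_rat s \<longrightarrow>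
        \<bar>f y - f x - Lq f x (y - x)\<bar> \<le> of_rat r * norm (y - x)))"
  have "(f has_derivative Lq f x) (at x)"
    unfolding has_derivative_at_alt
  proof (intro conjI Lq_bl allI impI)
    fix e :: real assume "e > 0"
    obtain e' where e': "e' \<in> \<rat>" "0 < e'" "e' < e" using Rats_dense_in_real[OF \<open>e > 0\<close>] by blast
    then obtain r where r: "e' = of_rat r" by (auto simp: Rats_def)
    with e' have "r > 0" by simp
    with H obtain s where s: "s > 0" "\<forall>y\<in>C. norm (y - x) < of_rat s \<longrightarrow>
        \<bar>f y - f x - Lq f x (y - x)\<bar> \<le> of_rat r * norm (y - x)" by blast
    let ?B = "ball x (of_rat s)"
    let ?Z = "{y. \<bar>f y - f x - Lq f x (y - x)\<bar> \<le> of_rat r * norm (y - x)}"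
    have clZ: "closed ?Z"
    proof (rule closed_Collect_le)
      have "continuous_on UNIV (\<lambda>y. Lq f x (y - x))"
        by (rule bounded_linear.continuous_on[OF Lq_bl]) (intro continuous_intros)
      then show "continuous_on UNIV (\<lambda>y. \<bar>f y - f x - Lq f x (y - x)\<bar>)"
        using cont by (intro continuous_intros) auto
    qed (auto intro!: continuous_intros)
    have sub: "C \<inter> ?B \<subseteq> ?Z" using s by (auto simp: dist_norm norm_minus_commute)
    have "?B \<subseteq> closure (C \<inter> ?B)"
    proof
      fix y assume y: "y \<in> ?B"
      show "y \<in> closure (C \<inter> ?B)"
        unfolding closure_approachable
      proof (intro allI impI)
        fix ee :: real assume "ee > 0"
        have "open (?B \<inter> ball y ee)" by auto
        moreover have "y \<in> ?B \<inter> ball y ee" using y \<open>ee > 0\<close> by auto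
        ultimately obtain d where "d \<in> C" "d \<in> ?B \<inter> ball y ee" using dense by blast
        then show "\<exists>d\<in>C \<inter> ?B. dist d y < ee" by (auto simp: dist_commute)
      qed
    qed
    also have "\<dots> \<subseteq> ?Z" using closure_minimal[OF sub clZ] .
    finally have "?B \<subseteq> ?Z" .
    then show "\<exists>d>0. \<forall>y. norm (y - x) < d \<longrightarrow> norm (f y - f x - Lq f x (y - x)) \<le> e * norm (y - x)"
      using s(1) r e'
      apply (intro exI[of _ "of_rat s"])
      apply (auto simp: dist_norm norm_minus_commute subset_iff)
      by (smt (verit, ccfv_SIG) mult_right_mono norm_ge_zero)
  qed
  then show "f differentiable (at x)" by (auto simp: differentiable_def)
qed

lemma frechet_meas:
  fixes f :: "'a::euclidean_space \<Rightarrow> real"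
  assumes cont: "continuous_on UNIV f"
  shows "(\<lambda>x. frechet_derivative f (at x) b) \<in> borel_measurable borel"
proof -
  obtain C :: "'a set" where C: "countable C" "\<And>X. open X \<Longrightarrow> X \<noteq> {} \<Longrightarrow> \<exists>d\<in>C. d \<in> X"
    by (rule countable_dense_setE) blast
  have Cne: "C \<noteq> {}" using C(2)[of UNIV] by auto
  define cn where "cn = from_nat_into C"
  have Ceq: "C = range cn" using range_from_nat_into[OF Cne C(1)] cn_def by simp
  define P where "P x = (\<forall>r::rat. r > 0 \<longrightarrow> (\<exists>s::rat. s > 0 \<and> (\<forall>n::nat. norm (cn n - x) < of_rat s \<longrightarrow>
        \<bar>f (cn n) - f x - Lq f x (cn n - x)\<bar> \<le> of_rat r * norm (cn n - x))))" for x
  have Pd: "f differentiable (at x) \<longleftrightarrow> P x" for x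
    using diff_char[OF cont C(2), of x] unfolding P_def Ceq by auto
  have fm[measurable]: "f \<in> borel_measurable borel"
    using cont by (simp add: borel_measurable_continuous_onI)
  have Lm[measurable]: "(\<lambda>x. Lq f x (cn n - x)) \<in> borel_measurable borel" for n
    by (rule Lq_meas[OF cont]) measurable
  have Lm2[measurable]: "(\<lambda>x. Lq f x b) \<in> borel_measurable borel"
    by (rule Lq_meas[OF cont]) measurable
  have Pm[measurable]: "Measurable.pred borel P" unfolding P_def by measurable
  have eq: "frechet_derivative f (at x) b = (if P x then Lq f x b else (SOME f'. False) b)" for x
  proof (cases "P x")
    case True
    then have "f differentiable (at x)" using Pd by simp
    then have "(f has_derivative frechet_derivative f (at x)) (at x)" using frechet_derivative_works by blast
    then show ?thesis using True Lq_deriv by metis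
  next
    case False
    then show ?thesis using Pd frechet_nondiff by metis
  qed
  show ?thesis unfolding eq by measurable
qed

lemma grad_meas:
  fixes f :: "'a::euclidean_space \<Rightarrow> real"
  assumes cont: "continuous_on UNIV f"
  shows "grad f \<in> borel_measurable borel"
proof -
  have [measurable]: "(\<lambda>x. frechet_derivative f (at x) b) \<in> borel_measurable borel" for b
    using frechet_meas[OF cont] .
  show ?thesis unfolding grad_def[abs_def] by measurable
qed

definition monoP :: "('a::euclidean_space \<Rightarrow> nat) \<Rightarrow> 'a \<Rightarrow> real" where
  "monoP \<alpha> x = (\<Prod>i\<in>Basis. (x \<bullet> i) ^ (\<alpha> i))"

definition monoPD :: "('a::euclidean_space \<Rightarrow> nat) \<Rightarrow> 'a \<Rightarrow> 'a \<Rightarrow> real" where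
  "monoPD \<alpha> x h = (\<Sum>i\<in>Basis. (of_nat (\<alpha> i) * (h \<bullet> i) * (x \<bullet> i) ^ (\<alpha> i - 1)) * (\<Prod>j\<in>Basis - {i}. (x \<bullet> j) ^ (\<alpha> j)))"

lemma mono_deriv: "(monoP \<alpha> has_derivative monoPD \<alpha> x) (at x)"
  unfolding monoP_def[abs_def] monoPD_def[abs_def]
  by (rule has_derivative_prod) (auto intro!: derivative_eq_intros)

lemma monoD_cont: "continuous_on UNIV (\<lambda>x. monoPD \<alpha> x h)"
  unfolding monoPD_def by (intro continuous_intros)

lemma mono_cont: "continuous_on UNIV (monoP \<alpha>)"
  unfolding monoP_def by (intro continuous_intros)

lemma polyfun_C1:
  fixes P :: "'a::euclidean_space \<Rightarrow> real"
  assumes "poly_fun_le p P"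
  shows "\<exists>D. (\<forall>x. (P has_derivative D x) (at x)) \<and> (\<forall>h. continuous_on UNIV (\<lambda>x. D x h))"
proof -
  obtain A c where A: "finite A" "P = (\<lambda>x. \<Sum>\<alpha>\<in>A. c \<alpha> * monoP \<alpha> x)"
    using assms unfolding poly_fun_le_def monoP_def by blast
  show ?thesis
  proof (intro exI conjI allI)
    fix x show "(P has_derivative (\<lambda>h. \<Sum>\<alpha>\<in>A. c \<alpha> * monoPD \<alpha> x h)) (at x)"
      unfolding A(2) by (intro has_derivative_sum has_derivative_mult_right mono_deriv)
  next
    fix h show "continuous_on UNIV (\<lambda>x. \<Sum>\<alpha>\<in>A. c \<alpha> * monoPD \<alpha> x h)"
      by (intro continuous_intros monoD_cont)
  qed
qed

lemma polyfun_cont: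
  assumes "poly_fun_le p P" shows "continuous_on UNIV P"
  using polyfun_C1[OF assms]
  by (meson continuous_at_imp_continuous_on differentiable_imp_continuous_within differentiable_def)

lemma polyfun_grad_cont:
  fixes P :: "'a::euclidean_space \<Rightarrow> real"
  assumes "poly_fun_le p P"
  shows "continuous_on UNIV (grad P)" and "\<And>x. P differentiable (at x)"
proof -
  obtain D where D: "\<And>x. (P has_derivative D x) (at x)" "\<And>h. continuous_on UNIV (\<lambda>x. D x h)"
    using polyfun_C1[OF assms] by blast
  have "grad P = (\<lambda>x. \<Sum>i\<in>Basis. D x i *\<^sub>R i)"
    unfolding grad_def[abs_def] using D(1) frechet_derivative_at by metis
  then show "continuous_on UNIV (grad P)" using D(2) by (auto intro!: continuous_intros)
  show "\<And>x. P differentiable (at x)" using D(1) by (auto simp: differentiable_def)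
qed

lemma polyfun_repr: "poly_fun_le p P \<longleftrightarrow>
  (\<exists>A c. finite A \<and> (\<forall>\<alpha>\<in>A. (\<Sum>i\<in>Basis. \<alpha> i) \<le> p) \<and> P = (\<lambda>x. \<Sum>\<alpha>\<in>A. c \<alpha> * monoP \<alpha> x))"
  unfolding poly_fun_le_def monoP_def by simp

lemma polyfun_zero: "poly_fun_le p (\<lambda>x. 0)"
  unfolding polyfun_repr by (rule exI[of _ "{}"]) auto

lemma polyfun_scale: "poly_fun_le p P \<Longrightarrow> poly_fun_le p (\<lambda>x. r * P x)"
  unfolding polyfun_repr
  by (auto simp: sum_distrib_left mult.assoc intro!: exI[of _ "\<lambda>\<alpha>. r * _ \<alpha>"])

lemma polyfun_add:
  assumes "poly_fun_le p P" "poly_fun_le p Q"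
  shows "poly_fun_le p (\<lambda>x. P x + Q x)"
proof -
  obtain A c where A: "finite A" "\<forall>\<alpha>\<in>A. (\<Sum>i\<in>Basis. \<alpha> i) \<le> p" "P = (\<lambda>x. \<Sum>\<alpha>\<in>A. c \<alpha> * monoP \<alpha> x)"
    using assms(1) unfolding polyfun_repr by blast
  obtain B d where B: "finite B" "\<forall>\<alpha>\<in>B. (\<Sum>i\<in>Basis. \<alpha> i) \<le> p" "Q = (\<lambda>x. \<Sum>\<alpha>\<in>B. d \<alpha> * monoP \<alpha> x)"
    using assms(2) unfolding polyfun_repr by blast
  define e where "e \<alpha> = (if \<alpha> \<in> A then c \<alpha> else 0) + (if \<alpha> \<in> B then d \<alpha> else 0)" for \<alpha>
  have s1: "(\<Sum>\<alpha>\<in>A \<union> B. (if \<alpha> \<in> A then c \<alpha> else 0) * monoP \<alpha> x) = (\<Sum>\<alpha>\<in>A. c \<alpha> * monoP \<alpha> x)" for x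
    by (rule sum.mono_neutral_cong_right) (use A B in auto)
  have s2: "(\<Sum>\<alpha>\<in>A \<union> B. (if \<alpha> \<in> B then d \<alpha> else 0) * monoP \<alpha> x) = (\<Sum>\<alpha>\<in>B. d \<alpha> * monoP \<alpha> x)" for x
    by (rule sum.mono_neutral_cong_right) (use A B in auto)
  show ?thesis unfolding polyfun_repr
    apply (rule exI[of _ "A \<union> B"], rule exI[of _ e])
    using A B s1 s2 by (auto simp: e_def distrib_right sum.distrib)
qed

lemma polyfun_sum:
  assumes "finite I" "\<And>k. k \<in> I \<Longrightarrow> poly_fun_le p (P k)"
  shows "poly_fun_le p (\<lambda>x. \<Sum>k\<in>I. a k * P k x)"
  using assms
proof (induction I rule: finite_induct)
  case empty then show ?case by (simp add: polyfun_zero)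
next
  case (insert k I)
  then show ?case by (simp add: polyfun_add polyfun_scale)
qed

lemma Vh0_cont: "f \<in> Vh0 \<Omega> Th p \<Longrightarrow> continuous_on UNIV f"
  unfolding Vh0_def by simp

lemma Vh0_sum:
  assumes "finite I" "\<And>k. k \<in> I \<Longrightarrow> f k \<in> Vh0 \<Omega> Th p"
  shows "(\<lambda>x. \<Sum>k\<in>I. a k * f k x) \<in> Vh0 \<Omega> Th p"
proof -
  have c: "continuous_on UNIV (\<lambda>x. \<Sum>k\<in>I. a k * f k x)"
    using assms by (intro continuous_intros) (auto simp: Vh0_def)
  have z: "\<forall>x. x \<notin> \<Omega> \<longrightarrow> (\<Sum>k\<in>I. a k * f k x) = 0"
    using assms by (auto simp: Vh0_def)
  have "\<exists>P. poly_fun_le p P \<and> (\<forall>x\<in>K. (\<Sum>k\<in>I. a k * f k x) = P x)" if K: "K \<in> Th" for K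
  proof -
    have "\<forall>k\<in>I. \<exists>P. poly_fun_le p P \<and> (\<forall>x\<in>K. f k x = P x)"
      using assms K by (auto simp: Vh0_def)
    then obtain PP where PP: "\<forall>k\<in>I. poly_fun_le p (PP k) \<and> (\<forall>x\<in>K. f k x = PP k x)"
      by metis
    show ?thesis
      by (rule exI[of _ "\<lambda>x. \<Sum>k\<in>I. a k * PP k x"]) (use PP assms(1) in \<open>auto intro: polyfun_sum\<close>)
  qed
  then show ?thesis using c z unfolding Vh0_def by blast
qed

lemma Vh0_zero: "(\<lambda>x. 0) \<in> Vh0 \<Omega> Th p"
  using Vh0_sum[of "{}"] by simp

lemma Vh0_lin2:
  assumes "f \<in> Vh0 \<Omega> Th p" "g \<in> Vh0 \<Omega> Th p"
  shows "(\<lambda>x. a * f x + b * g x) \<in> Vh0 \<Omega> Th p"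
  using Vh0_sum[of "{0::nat,1}" "\<lambda>k. if k = 0 then f else g" \<Omega> Th p "\<lambda>k. if k = 0 then a else b"] assms
  by simp

lemma mesh_K:
  assumes "conforming_simplicial_mesh \<Omega> Th" "K \<in> Th"
  shows "convex K" "compact K" "interior K \<noteq> {}" "closed K"
proof -
  have S: "int DIM('a) simplex K" using assms unfolding conforming_simplicial_mesh_def by blast
  show "convex K" using convex_simplex[OF S] .
  show "compact K" using compact_simplex[OF S] .
  show "closed K" using closed_simplex[OF S] .
  obtain C where C: "\<not> affine_dependent C" "int (card C) = int DIM('a) + 1" "K = convex hull C"
    using S unfolding simplex_def by blast
  have "card C = Suc DIM('a)" using C(2) by simp
  then show "interior K \<noteq> {}" using interior_convex_hull_eq_empty C by blast
qed

lemma negl_null: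
  fixes N :: "'a::euclidean_space set"
  assumes "negligible N" "N \<in> sets borel"
  shows "N \<in> null_sets lborel"
  using assms by (auto simp: negligible_iff_null_sets null_sets_completion_iff)

lemma AE_interior:
  fixes \<Omega> :: "'a::euclidean_space set"
  assumes mesh: "conforming_simplicial_mesh \<Omega> Th"
  shows "AE x in lborel. x \<in> closure \<Omega> \<longrightarrow> (\<exists>K\<in>Th. x \<in> interior K)"
proof (rule AE_I')
  have fin: "finite Th" using mesh unfolding conforming_simplicial_mesh_def by blast
  show "\<Union>(frontier ` Th) \<in> null_sets lborel"
  proof (rule negl_null)
    show "negligible (\<Union>(frontier ` Th))"
      using fin mesh_K[OF mesh] by (intro negligible_Union) (auto intro: negligible_convex_frontier)
    show "\<Union>(frontier ` Th) \<in> sets borel"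
      using fin by (intro sets.finite_Union) auto
  qed
  show "{x \<in> space lborel. \<not> (x \<in> closure \<Omega> \<longrightarrow> (\<exists>K\<in>Th. x \<in> interior K))} \<subseteq> \<Union>(frontier ` Th)"
  proof
    fix x assume x: "x \<in> {x \<in> space lborel. \<not> (x \<in> closure \<Omega> \<longrightarrow> (\<exists>K\<in>Th. x \<in> interior K))}"
    then have "x \<in> \<Union>Th" using mesh unfolding conforming_simplicial_mesh_def by auto
    then obtain K where K: "K \<in> Th" "x \<in> K" by blast
    then have "x \<in> frontier K" using x mesh_K(4)[OF mesh K(1)]
      by (auto simp: frontier_def closure_closed)
    then show "x \<in> \<Union>(frontier ` Th)" using K by auto
  qed
qed

lemma Vh0_local_deriv:
  assumes mesh: "conforming_simplicial_mesh \<Omega> Th" and f: "f \<in> Vh0 \<Omega> Th p"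
    and K: "K \<in> Th" and x: "x \<in> interior K"
  obtains P where "poly_fun_le p P" "\<forall>y\<in>K. f y = P y" "f differentiable (at x)"
    "frechet_derivative f (at x) = frechet_derivative P (at x)" "grad f x = grad P x"
proof -
  obtain P where P: "poly_fun_le p P" "\<forall>y\<in>K. f y = P y" using f K unfolding Vh0_def by blast
  have dP: "(P has_derivative frechet_derivative P (at x)) (at x)"
    using polyfun_grad_cont(2)[OF P(1)] frechet_derivative_works by blast
  have df: "(f has_derivative frechet_derivative P (at x)) (at x)"
    by (rule has_derivative_transform_within_open[OF dP open_interior x]) (use P(2) interior_subset[of K] in \<open>metis subsetD\<close>)
  then have "frechet_derivative f (at x) = frechet_derivative P (at x)"
    using frechet_derivative_at by metis
  moreover have "grad f x = grad P x" unfolding grad_def using calculation by simp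
  ultimately show ?thesis using that P df by (auto simp: differentiable_def)
qed

lemma grad_sum:
  fixes f :: "nat \<Rightarrow> 'a::euclidean_space \<Rightarrow> real"
  assumes "finite I" "\<And>k. k \<in> I \<Longrightarrow> f k differentiable (at x)"
  shows "grad (\<lambda>y. \<Sum>k\<in>I. a k * f k y) x = (\<Sum>k\<in>I. a k *\<^sub>R grad (f k) x)"
proof -
  have d: "(f k has_derivative frechet_derivative (f k) (at x)) (at x)" if "k \<in> I" for k
    using assms(2)[OF that] frechet_derivative_works by blast
  have "((\<lambda>y. \<Sum>k\<in>I. a k * f k y) has_derivative (\<lambda>h. \<Sum>k\<in>I. a k * frechet_derivative (f k) (at x) h)) (at x)"
    by (rule has_derivative_sum, rule has_derivative_mult_right, rule d)
  then have "frechet_derivative (\<lambda>y. \<Sum>k\<in>I. a k * f k y) (at x) = (\<lambda>h. \<Sum>k\<in>I. a k * frechet_derivative (f k) (at x) h)"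
    by (rule frechet_derivative_at[symmetric])
  then have "grad (\<lambda>y. \<Sum>k\<in>I. a k * f k y) x = (\<Sum>i\<in>Basis. (\<Sum>k\<in>I. a k * frechet_derivative (f k) (at x) i) *\<^sub>R i)"
    unfolding grad_def by simp
  also have "\<dots> = (\<Sum>i\<in>Basis. \<Sum>k\<in>I. a k *\<^sub>R (frechet_derivative (f k) (at x) i *\<^sub>R i))"
    by (simp add: scaleR_sum_left)
  also have "\<dots> = (\<Sum>k\<in>I. \<Sum>i\<in>Basis. a k *\<^sub>R (frechet_derivative (f k) (at x) i *\<^sub>R i))"
    by (rule sum.swap)
  also have "\<dots> = (\<Sum>k\<in>I. a k *\<^sub>R grad (f k) x)"
    unfolding grad_def by (simp add: scaleR_sum_right)
  finally show ?thesis .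
qed

lemma Vh0_grad_bound:
  assumes mesh: "conforming_simplicial_mesh \<Omega> Th" and f: "f \<in> Vh0 \<Omega> Th p"
  shows "\<exists>M. AE x in lborel. x \<in> closure \<Omega> \<longrightarrow> norm (grad f x) \<le> M"
proof -
  have fin: "finite Th" using mesh unfolding conforming_simplicial_mesh_def by blast
  have "\<forall>K\<in>Th. \<exists>M\<ge>0. \<forall>x\<in>interior K. norm (grad f x) \<le> M"
  proof
    fix K assume K: "K \<in> Th"
    obtain P where P: "poly_fun_le p P" "\<forall>y\<in>K. f y = P y" using f K unfolding Vh0_def by blast
    have "compact (grad P ` K)"
      using compact_continuous_image[OF continuous_on_subset[OF polyfun_grad_cont(1)[OF P(1)]] mesh_K(2)[OF mesh K]]
      by simp
    then obtain M where M: "M > 0" "\<forall>y\<in>K. norm (grad P y) \<le> M"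
      using compact_imp_bounded bounded_pos by (metis imageI)
    have "norm (grad f x) \<le> M" if x: "x \<in> interior K" for x
    proof -
      obtain Q where Q: "poly_fun_le p Q" "\<forall>y\<in>K. f y = Q y" "grad f x = grad Q x"
        using Vh0_local_deriv[OF mesh f K x] by metis
      have "\<forall>y\<in>interior K. P y = Q y"
      proof
        fix y assume "y \<in> interior K" then have "y \<in> K" using interior_subset by blast
        then show "P y = Q y" using P(2) Q(2) by metis
      qed
      then have "grad P x = grad Q x"
      proof -
        have dQ: "(Q has_derivative frechet_derivative Q (at x)) (at x)"
          using polyfun_grad_cont(2)[OF Q(1)] frechet_derivative_works by blast
        have "(P has_derivative frechet_derivative Q (at x)) (at x)"
          by (rule has_derivative_transform_within_open[OF dQ open_interior x]) (use \<open>\<forall>y\<in>interior K. P y = Q y\<close> in auto)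
        then show ?thesis unfolding grad_def using frechet_derivative_at by metis
      qed
      moreover have "x \<in> K" using x interior_subset by blast
      ultimately show ?thesis using Q(3) M(2) by metis
    qed
    then show "\<exists>M\<ge>0. \<forall>x\<in>interior K. norm (grad f x) \<le> M" using M(1) by (intro exI[of _ M]) auto
  qed
  then obtain MK where MK: "\<forall>K\<in>Th. MK K \<ge> 0 \<and> (\<forall>x\<in>interior K. norm (grad f x) \<le> MK K)" by metis
  show ?thesis
  proof (intro exI[of _ "\<Sum>K\<in>Th. MK K"], rule AE_mp[OF AE_interior[OF mesh]], intro AE_I2 impI)
    fix x assume "x \<in> closure \<Omega> \<longrightarrow> (\<exists>K\<in>Th. x \<in> interior K)" "x \<in> closure \<Omega>"
    then obtain K where K: "K \<in> Th" "x \<in> interior K" by blast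
    have "norm (grad f x) \<le> MK K" using MK K by blast
    also have "\<dots> \<le> (\<Sum>K\<in>Th. MK K)" using MK K fin by (intro member_le_sum) auto
    finally show "norm (grad f x) \<le> (\<Sum>K\<in>Th. MK K)" .
  qed
qed

lemma Vh0_grad_eq:
  assumes f: "f \<in> Vh0 \<Omega> Th p" and P: "poly_fun_le p P" "\<forall>y\<in>K. f y = P y"
    and x: "x \<in> interior K"
  shows "grad f x = grad P x" "f differentiable (at x)"
proof -
  have dP: "(P has_derivative frechet_derivative P (at x)) (at x)"
    using polyfun_grad_cont(2)[OF P(1)] frechet_derivative_works by blast
  have df: "(f has_derivative frechet_derivative P (at x)) (at x)"
    by (rule has_derivative_transform_within_open[OF dP open_interior x]) (use P(2) interior_subset[of K] in \<open>metis subsetD\<close>)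
  then have "frechet_derivative f (at x) = frechet_derivative P (at x)"
    by (rule frechet_derivative_at[symmetric])
  then show "grad f x = grad P x" unfolding grad_def by simp
  show "f differentiable (at x)" using df by (auto simp: differentiable_def)
qed

lemma grad_zero_deriv:
  fixes P :: "'a::euclidean_space \<Rightarrow> real"
  assumes "P differentiable (at x)" "grad P x = 0"
  shows "(P has_derivative (\<lambda>h. 0)) (at x)"
proof -
  let ?F = "frechet_derivative P (at x)"
  have d: "(P has_derivative ?F) (at x)" using assms(1) frechet_derivative_works by blast
  have lin: "linear ?F" using d has_derivative_linear by blast
  have Fb: "?F b = 0" if "b \<in> Basis" for b
  proof -
    have "grad P x \<bullet> b = (\<Sum>i\<in>Basis. ?F i * (i \<bullet> b))"
      unfolding grad_def by (simp add: inner_sum_left)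
    also have "\<dots> = ?F b" using that by (simp add: inner_Basis if_distrib cong: if_cong)
    finally show ?thesis using assms(2) by simp
  qed
  have "?F = (\<lambda>h. 0)"
  proof
    fix h
    have "?F h = ?F (\<Sum>b\<in>Basis. (h \<bullet> b) *\<^sub>R b)" by (simp add: euclidean_representation)
    also have "\<dots> = (\<Sum>b\<in>Basis. (h \<bullet> b) * ?F b)" using lin by (simp add: linear_sum linear_scale)
    finally show "?F h = 0" using Fb by simp
  qed
  then show ?thesis using d by simp
qed

lemma Vh0_grad_zero:
  fixes \<Omega> :: "'a::euclidean_space set"
  assumes dom: "polytopic_domain \<Omega>" and mesh: "conforming_simplicial_mesh \<Omega> Th"
    and m: "m \<in> Vh0 \<Omega> Th p"
    and ae: "AE x in lborel. x \<in> \<Omega> \<longrightarrow> grad m x = 0"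
  shows "m x = 0"
proof -
  have fin: "finite Th" and cov: "\<Union>Th = closure \<Omega>"
    using mesh unfolding conforming_simplicial_mesh_def by auto
  have opn: "open \<Omega>" and conn: "connected \<Omega>" and ne: "\<Omega> \<noteq> {}" and bdd: "bounded \<Omega>"
    using dom unfolding polytopic_domain_def by auto
  have mc: "continuous_on UNIV m" using m by (simp add: Vh0_cont)
  obtain N where N: "{x \<in> space lborel. \<not> (x \<in> \<Omega> \<longrightarrow> grad m x = 0)} \<subseteq> N" "N \<in> null_sets lborel"
    using ae by (auto elim!: AE_E simp: null_sets_def)
  have Nneg: "negligible N"
    using N(2) by (metis negligible_iff_null_sets null_setsD2 null_sets_completion_iff)
  have const: "\<exists>cK. \<forall>y\<in>K. m y = cK" if K: "K \<in> Th" for K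
  proof -
    obtain P where P: "poly_fun_le p P" "\<forall>y\<in>K. m y = P y" using m K unfolding Vh0_def by blast
    have gc: "continuous_on UNIV (grad P)" using polyfun_grad_cont(1)[OF P(1)] .
    have gP: "grad P y = 0" if y: "y \<in> interior K" for y
    proof (rule ccontr)
      assume ny: "grad P y \<noteq> 0"
      define U where "U = interior K \<inter> {y. grad P y \<noteq> 0}"
      have oU: "open U" unfolding U_def
        using open_Collect_neq[OF gc continuous_on_const] by blast
      have "U \<noteq> {}" using y ny U_def by blast
      moreover have "U \<subseteq> closure \<Omega>" using K cov interior_subset[of K] U_def by blast
      ultimately have "U \<inter> closure \<Omega> \<noteq> {}" by blast
      then have UO: "U \<inter> \<Omega> \<noteq> {}" using open_Int_closure_eq_empty[OF oU] by blast
      have "U \<inter> \<Omega> \<subseteq> N"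
      proof
        fix z assume z: "z \<in> U \<inter> \<Omega>"
        then have "grad m z = grad P z" using Vh0_grad_eq(1)[OF m P] U_def by blast
        then have "grad m z \<noteq> 0" using z U_def by auto
        then show "z \<in> N" using N(1) z by auto
      qed
      then have "negligible (U \<inter> \<Omega>)" using negligible_subset[OF Nneg] by blast
      moreover have "open (U \<inter> \<Omega>)" using oU opn by blast
      ultimately show False using open_not_negligible UO by blast
    qed
    have "\<exists>cK. \<forall>y\<in>interior K. P y = cK"
    proof (rule has_derivative_zero_constant[OF convex_interior[OF mesh_K(1)[OF mesh K]]])
      fix y assume y: "y \<in> interior K"
      have "(P has_derivative (\<lambda>h. 0)) (at y)"
        using grad_zero_deriv[OF polyfun_grad_cont(2)[OF P(1)] gP[OF y]] .
      then show "(P has_derivative (\<lambda>h. 0)) (at y within interior K)"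
        using has_derivative_at_withinI by blast
    qed
    then obtain cK where cK: "\<forall>y\<in>interior K. P y = cK" by blast
    have "interior K \<subseteq> {y. m y = cK}" using cK P(2) interior_subset[of K] by auto
    moreover have "closed {y. m y = cK}" using closed_Collect_eq[OF mc continuous_on_const] .
    ultimately have "closure (interior K) \<subseteq> {y. m y = cK}" by (rule closure_minimal)
    moreover have "closure (interior K) = K"
      using convex_closure_interior[OF mesh_K(1,3)[OF mesh K]] closure_closed[OF mesh_K(4)[OF mesh K]] by simp
    ultimately show ?thesis by blast
  qed
  then obtain cK where cK: "\<forall>K\<in>Th. \<forall>y\<in>K. m y = cK K" by metis
  have "m ` closure \<Omega> \<subseteq> cK ` Th" using cK cov by blast
  then have "finite (m ` closure \<Omega>)" using fin finite_subset by blast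
  then have mco: "m constant_on closure \<Omega>"
    using continuous_finite_range_constant[OF connected_imp_connected_closure[OF conn] continuous_on_subset[OF mc]]
    by blast
  have "frontier \<Omega> \<noteq> {}" using ne bdd frontier_eq_empty not_bounded_UNIV by metis
  then obtain y0 where y0: "y0 \<in> frontier \<Omega>" by blast
  then have y0c: "y0 \<in> closure \<Omega>" and y0n: "y0 \<notin> \<Omega>"
    using opn by (auto simp: frontier_def interior_open)
  have "m y0 = 0" using m y0n unfolding Vh0_def by blast
  show "m x = 0"
  proof (cases "x \<in> closure \<Omega>")
    case True
    then show ?thesis using mco y0c \<open>m y0 = 0\<close> unfolding constant_on_def by metis
  next
    case False
    then have "x \<notin> \<Omega>" using closure_subset by blast
    then show ?thesis using m unfolding Vh0_def by blast
  qed
qed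

locale spat =
  fixes \<Omega> :: "'a::euclidean_space set" and Th :: "'a set set" and c :: "'a \<Rightarrow> real"
    and c_lo c_hi :: real and p :: nat
  assumes dom: "polytopic_domain \<Omega>" and mesh: "conforming_simplicial_mesh \<Omega> Th"
    and c_cont: "continuous_on (closure \<Omega>) c"
    and c_lo: "0 < c_lo" and c_bnd: "\<forall>x\<in>closure \<Omega>. c_lo < c x \<and> c x < c_hi"
begin

definition cc :: "'a \<Rightarrow> real" where "cc x = indicator \<Omega> x * c x"

lemma opn: "open \<Omega>" and bdd: "bounded \<Omega>"
  using dom unfolding polytopic_domain_def by auto

lemma cc_meas[measurable]: "cc \<in> borel_measurable borel"
proof -
  have "(\<lambda>x. indicator \<Omega> x *\<^sub>R c x) \<in> borel_measurable borel"
    by (rule borel_measurable_continuous_on_indicator)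
       (use opn continuous_on_subset[OF c_cont closure_subset] in auto)
  then show ?thesis unfolding cc_def[abs_def] by simp
qed

lemma cin: "x \<in> \<Omega> \<Longrightarrow> c_lo < c x \<and> c x < c_hi"
  using c_bnd closure_subset[of \<Omega>] by blast

lemma chi: "0 < c_hi"
proof -
  obtain x where "x \<in> \<Omega>" using dom unfolding polytopic_domain_def by blast
  then show ?thesis using cin[of x] c_lo by linarith
qed

lemma cc_bnd: "\<bar>cc x\<bar> \<le> c_hi" "0 \<le> cc x"
  using cin[of x] c_lo chi by (auto simp: cc_def indicator_def)

lemma setint_cc: "(LINT x:\<Omega>|lborel. (c x)\<^sup>2 * G x) = (LINT x|lborel. (cc x)\<^sup>2 * G x)"
  unfolding set_lebesgue_integral_def cc_def
  by (rule Bochner_Integration.integral_cong) (auto simp: indicator_def power2_eq_square)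

lemma integrable_grad:
  assumes f: "f \<in> Vh0 \<Omega> Th p" and g: "g \<in> Vh0 \<Omega> Th p"
  shows "integrable lborel (\<lambda>x. (cc x)\<^sup>2 * (grad f x \<bullet> grad g x))"
proof -
  have [measurable]: "grad f \<in> borel_measurable borel" "grad g \<in> borel_measurable borel"
    using grad_meas Vh0_cont f g by blast+
  obtain Mf where Mf: "AE x in lborel. x \<in> closure \<Omega> \<longrightarrow> norm (grad f x) \<le> Mf"
    using Vh0_grad_bound[OF mesh f] by blast
  obtain Mg where Mg: "AE x in lborel. x \<in> closure \<Omega> \<longrightarrow> norm (grad g x) \<le> Mg"
    using Vh0_grad_bound[OF mesh g] by blast
  have ii: "integrable lborel (\<lambda>x. indicator \<Omega> x * (c_hi\<^sup>2 * (\<bar>Mf\<bar> * \<bar>Mg\<bar>)))"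
    using emeasure_bounded_finite[OF bdd] opn by (intro integrable_mult_left) auto
  show ?thesis
  proof (rule Bochner_Integration.integrable_bound[OF ii])
    show "(\<lambda>x. (cc x)\<^sup>2 * (grad f x \<bullet> grad g x)) \<in> borel_measurable lborel" by measurable
    show "AE x in lborel. norm ((cc x)\<^sup>2 * (grad f x \<bullet> grad g x)) \<le> norm (indicator \<Omega> x * (c_hi\<^sup>2 * (\<bar>Mf\<bar> * \<bar>Mg\<bar>)))"
      using Mf Mg
    proof eventually_elim
      case (elim x)
      show ?case
      proof (cases "x \<in> \<Omega>")
        case False then show ?thesis by (simp add: cc_def)
      next
        case True
        then have xc: "x \<in> closure \<Omega>" using closure_subset by blast
        have "\<bar>grad f x \<bullet> grad g x\<bar> \<le> norm (grad f x) * norm (grad g x)" by (rule Cauchy_Schwarz_ineq2)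
        also have "\<dots> \<le> \<bar>Mf\<bar> * \<bar>Mg\<bar>" using elim xc by (intro mult_mono) auto
        finally have 1: "\<bar>grad f x \<bullet> grad g x\<bar> \<le> \<bar>Mf\<bar> * \<bar>Mg\<bar>" .
        have 2: "(cc x)\<^sup>2 \<le> c_hi\<^sup>2" using cc_bnd[of x] by (simp add: abs_le_square_iff)
        have "\<bar>(cc x)\<^sup>2 * (grad f x \<bullet> grad g x)\<bar> \<le> c_hi\<^sup>2 * (\<bar>Mf\<bar> * \<bar>Mg\<bar>)"
          unfolding abs_mult using 1 2 by (intro mult_mono) auto
        then show ?thesis using True by simp
      qed
    qed
  qed
qed

definition Sg :: "('a \<Rightarrow> real) \<Rightarrow> ('a \<Rightarrow> real) \<Rightarrow> real" where
  "Sg f g = (LINT x|lborel. (cc x)\<^sup>2 * (grad f x \<bullet> grad g x))"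

lemma bilin:
  fixes f g :: "nat \<Rightarrow> 'a \<Rightarrow> real"
  assumes I: "finite I" and J: "finite J"
    and f: "\<And>k. k \<in> I \<Longrightarrow> f k \<in> Vh0 \<Omega> Th p" and g: "\<And>l. l \<in> J \<Longrightarrow> g l \<in> Vh0 \<Omega> Th p"
  shows "(LINT x|lborel. (cc x)\<^sup>2 * (grad (\<lambda>y. \<Sum>k\<in>I. a k * f k y) x \<bullet> grad (\<lambda>y. \<Sum>l\<in>J. b l * g l y) x))
       = (\<Sum>k\<in>I. \<Sum>l\<in>J. a k * b l * Sg (f k) (g l))"
proof -
  have fc: "\<And>k. k \<in> I \<Longrightarrow> continuous_on UNIV (f k)" using f Vh0_cont by blast
  have gc: "\<And>l. l \<in> J \<Longrightarrow> continuous_on UNIV (g l)" using g Vh0_cont by blast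
  have cF: "continuous_on UNIV (\<lambda>y. \<Sum>k\<in>I. a k * f k y)"
    by (intro continuous_intros fc)
  have cG: "continuous_on UNIV (\<lambda>y. \<Sum>l\<in>J. b l * g l y)"
    by (intro continuous_intros gc)
  have [measurable]: "grad (\<lambda>y. \<Sum>k\<in>I. a k * f k y) \<in> borel_measurable borel"
    using grad_meas[OF cF] .
  have [measurable]: "grad (\<lambda>y. \<Sum>l\<in>J. b l * g l y) \<in> borel_measurable borel"
    using grad_meas[OF cG] .
  have [measurable]: "grad (f k) \<in> borel_measurable borel" if "k \<in> I" for k
    using grad_meas Vh0_cont f that by blast
  have [measurable]: "grad (g l) \<in> borel_measurable borel" if "l \<in> J" for l
    using grad_meas Vh0_cont g that by blast
  have "(LINT x|lborel. (cc x)\<^sup>2 * (grad (\<lambda>y. \<Sum>k\<in>I. a k * f k y) x \<bullet> grad (\<lambda>y. \<Sum>l\<in>J. b l * g l y) x))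
      = (LINT x|lborel. (\<Sum>k\<in>I. \<Sum>l\<in>J. a k * b l * ((cc x)\<^sup>2 * (grad (f k) x \<bullet> grad (g l) x))))"
  proof (rule integral_cong_AE)
    show "(\<lambda>x. (cc x)\<^sup>2 * (grad (\<lambda>y. \<Sum>k\<in>I. a k * f k y) x \<bullet> grad (\<lambda>y. \<Sum>l\<in>J. b l * g l y) x)) \<in> borel_measurable lborel"
      by measurable
    show "(\<lambda>x. \<Sum>k\<in>I. \<Sum>l\<in>J. a k * b l * ((cc x)\<^sup>2 * (grad (f k) x \<bullet> grad (g l) x))) \<in> borel_measurable lborel"
      using I J by measurable
    show "AE x in lborel. (cc x)\<^sup>2 * (grad (\<lambda>y. \<Sum>k\<in>I. a k * f k y) x \<bullet> grad (\<lambda>y. \<Sum>l\<in>J. b l * g l y) x)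
        = (\<Sum>k\<in>I. \<Sum>l\<in>J. a k * b l * ((cc x)\<^sup>2 * (grad (f k) x \<bullet> grad (g l) x)))"
      using AE_interior[OF mesh]
    proof eventually_elim
      case (elim x)
      show ?case
      proof (cases "x \<in> \<Omega>")
        case False then show ?thesis by (simp add: cc_def)
      next
        case True
        then obtain K where K: "K \<in> Th" "x \<in> interior K" using elim closure_subset by blast
        have df: "f k differentiable (at x)" if kI: "k \<in> I" for k
        proof -
          obtain P where "poly_fun_le p P" "\<forall>y\<in>K. f k y = P y" using f[OF kI] K unfolding Vh0_def by blast
          then show ?thesis using Vh0_grad_eq(2)[OF f[OF kI]] K by blast
        qed
        have dg: "g l differentiable (at x)" if lJ: "l \<in> J" for l
        proof -
          obtain P where "poly_fun_le p P" "\<forall>y\<in>K. g l y = P y" using g[OF lJ] K unfolding Vh0_def by blast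
          then show ?thesis using Vh0_grad_eq(2)[OF g[OF lJ]] K by blast
        qed
        have e1: "grad (\<lambda>y. \<Sum>k\<in>I. a k * f k y) x = (\<Sum>k\<in>I. a k *\<^sub>R grad (f k) x)"
          by (rule grad_sum[OF I df])
        have e2: "grad (\<lambda>y. \<Sum>l\<in>J. b l * g l y) x = (\<Sum>l\<in>J. b l *\<^sub>R grad (g l) x)"
          by (rule grad_sum[OF J dg])
        show ?thesis
          unfolding e1 e2
          by (simp add: inner_sum_left inner_sum_right sum_distrib_left mult_ac sum.swap[of _ J I])
      qed
    qed
  qed
  also have "\<dots> = (\<Sum>k\<in>I. \<Sum>l\<in>J. a k * b l * Sg (f k) (g l))"
    unfolding Sg_def using integrable_grad f g
    by (simp add: integral_sum integrable_sum)
  finally show ?thesis .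
qed

lemma Sg_zero:
  assumes m: "m \<in> Vh0 \<Omega> Th p" and z: "Sg m m = 0"
  shows "m x = 0"
proof (rule Vh0_grad_zero[OF dom mesh m])
  have int: "integrable lborel (\<lambda>x. (cc x)\<^sup>2 * (grad m x \<bullet> grad m x))" using integrable_grad[OF m m] .
  have "AE x in lborel. (cc x)\<^sup>2 * (grad m x \<bullet> grad m x) = 0"
    using z unfolding Sg_def by (subst (asm) integral_nonneg_eq_0_iff_AE[OF int]) auto
  then show "AE x in lborel. x \<in> \<Omega> \<longrightarrow> grad m x = 0"
  proof eventually_elim
    case (elim x)
    show ?case
    proof
      assume "x \<in> \<Omega>"
      then have "cc x > 0" using c_bnd c_lo closure_subset[of \<Omega>] by (force simp: cc_def)
      then show "grad m x = 0" using elim by simp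
    qed
  qed
qed

end

lemma pderiv_sum': "pderiv (sum f A) = (\<Sum>x\<in>A. pderiv (f x))"
  by (induction A rule: infinite_finite_induct) (simp_all add: pderiv_add)

lemma poly_ext: "(\<And>x. poly p x = poly q x) \<Longrightarrow> (p :: real poly) = q"
  using poly_eq_poly_eq_iff[of p q] by (auto simp: fun_eq_iff)

definition antid :: "real poly \<Rightarrow> real poly" where
  "antid p = (\<Sum>i\<le>degree p. monom (coeff p i / real (Suc i)) (Suc i))"

lemma pderiv_antid: "pderiv (antid p) = p"
proof -
  have "pderiv (antid p) = (\<Sum>i\<le>degree p. monom (coeff p i) i)"
    unfolding antid_def pderiv_sum' pderiv_monom by (simp del: of_nat_Suc)
  also have "\<dots> = p" by (rule poly_as_sum_of_monoms)
  finally show ?thesis .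
qed

lemma ftc_poly:
  fixes P :: "real poly"
  assumes "a \<le> t"
  shows "integral {a..t} (poly (pderiv P)) = poly P t - poly P a"
proof -
  have "(poly (pderiv P) has_integral (poly P t - poly P a)) {a..t}"
    by (rule fundamental_theorem_of_calculus[OF assms])
       (auto simp: has_real_derivative_iff_has_vector_derivative[symmetric]
             intro: DERIV_subset[OF poly_DERIV])
  then show ?thesis by (rule integral_unique)
qed

lemma pint: "poly (p :: real poly) integrable_on {a..b}"
  by (intro integrable_continuous_interval continuous_intros)

locale ab =
  fixes a b :: real
  assumes ab: "a < b"
begin

definition PI :: "real poly \<Rightarrow> real" where "PI p = integral {a..b} (poly p)"

lemma polyfun_simps: fixes p q :: "real poly" shows "poly (p + q) = (\<lambda>x. poly p x + poly q x)" "poly (p - q) = (\<lambda>x. poly p x - poly q x)"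
  "poly (- p) = (\<lambda>x. - poly p x)" "poly (smult c p) = (\<lambda>x. c * poly p x)" "poly 0 = (\<lambda>x. 0)"
  by (auto simp: fun_eq_iff poly_diff poly_minus)

lemma PI_add: "PI (p + q) = PI p + PI q"
  unfolding PI_def polyfun_simps by (simp add: integral_add pint)

lemma PI_diff: "PI (p - q) = PI p - PI q"
  unfolding PI_def polyfun_simps by (simp add: integral_diff pint)

lemma PI_minus: "PI (- p) = - PI p"
  unfolding PI_def polyfun_simps by (simp add: integral_neg pint)

lemma PI_smult: "PI (smult c p) = c * PI p"
  unfolding PI_def polyfun_simps by simp

lemma PI_zero: "PI 0 = 0"
  unfolding PI_def polyfun_simps by simp

lemma PI_sum: "PI (sum f A) = (\<Sum>x\<in>A. PI (f x))"
  by (induction A rule: infinite_finite_induct) (simp_all add: PI_add PI_zero)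

lemma FTC: "PI (pderiv P) = poly P b - poly P a"
  unfolding PI_def using ftc_poly ab by simp

lemma parts: "PI (pderiv P * Q) = poly P b * poly Q b - poly P a * poly Q a - PI (P * pderiv Q)"
proof -
  have "PI (pderiv (P * Q)) = PI (P * pderiv Q) + PI (pderiv P * Q)"
    by (simp add: pderiv_mult PI_add mult.commute)
  then show ?thesis using FTC[of "P * Q"] by simp
qed

lemma PI_sq0:
  assumes "PI (p * p) = 0" shows "p = 0"
proof (rule ccontr)
  assume p0: "p \<noteq> 0"
  have z: "poly (p * p) x = 0" if "x \<in> {a..b}" for x
  proof (rule has_integral_0_cbox_imp_0[where f="poly (p * p)" and a=a and b=b and x=x])
    show "continuous_on (cbox a b) (poly (p * p))" by (intro continuous_intros)
    show "0 \<le> poly (p * p) y" if "y \<in> box a b" for y by simp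
    show "(poly (p * p) has_integral 0) (cbox a b)"
      using assms pint[of "p * p" a b] unfolding PI_def by (simp add: has_integral_integral)
    show "box a b \<noteq> {}" using ab by simp
    show "x \<in> cbox a b" using that by simp
  qed
  have "{a..b} \<subseteq> {x. poly p x = 0}" using z by auto
  moreover have "finite {x. poly p x = 0}" using poly_roots_finite[OF p0] .
  ultimately show False using infinite_Icc[OF ab] finite_subset by blast
qed

definition orth :: "nat \<Rightarrow> real poly \<Rightarrow> bool" where
  "orth q L \<longleftrightarrow> (\<forall>r. degree r < q \<longrightarrow> PI (L * r) = 0)"

lemma orth_unique: "orth q D \<Longrightarrow> degree D < q \<Longrightarrow> D = 0"
  unfolding orth_def using PI_sq0 by blast

lemma orth_monom:
  assumes "\<forall>j<q. PI (L * monom 1 j) = 0"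
  shows "orth q L"
  unfolding orth_def
proof (intro allI impI)
  fix r :: "real poly" assume r: "degree r < q"
  have "L * r = L * (\<Sum>i\<le>degree r. monom (coeff r i) i)" by (simp add: poly_as_sum_of_monoms)
  also have "\<dots> = (\<Sum>i\<le>degree r. L * monom (coeff r i) i)"
    by (simp add: sum_distrib_left)
  also have "\<dots> = (\<Sum>i\<le>degree r. smult (coeff r i) (L * monom 1 i))"
  proof (rule sum.cong)
    fix i show "L * monom (coeff r i) i = smult (coeff r i) (L * monom 1 i)"
      by (metis mult_smult_right smult_monom mult.right_neutral)
  qed simp
  finally have "PI (L * r) = (\<Sum>i\<le>degree r. coeff r i * PI (L * monom 1 i))"
    by (simp add: PI_sum PI_smult)
  also have "\<dots> = 0" using assms r by (intro sum.neutral) auto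
  finally show "PI (L * r) = 0" .
qed

lemma PI_antid: "PI p = poly (antid p) b - poly (antid p) a"
  using FTC[of "antid p"] by (simp add: pderiv_antid)

lemma PI_reflect: "PI (pcompose p [:a + b, -1:]) = PI p"
proof -
  let ?r = "[:a + b, -1:]"
  have "pderiv (- pcompose (antid p) ?r) = pcompose p ?r"
    by (simp add: pderiv_pcompose pderiv_antid pderiv_pCons pderiv_minus)
  then have "PI (pcompose p ?r) = poly (- pcompose (antid p) ?r) b - poly (- pcompose (antid p) ?r) a"
    using FTC by metis
  also have "\<dots> = poly (antid p) b - poly (antid p) a" by (simp add: poly_pcompose)
  finally show ?thesis using PI_antid by simp
qed


lemma orth_decomp:
  assumes o1: "orth q L1" "degree L1 \<le> q" and o2: "orth q L2" "degree L2 \<le> q" and n2: "L2 \<noteq> 0"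
  shows "L1 = smult (coeff L1 q / coeff L2 q) L2"
proof -
  have d2: "degree L2 = q"
  proof (rule ccontr)
    assume "degree L2 \<noteq> q" then have "degree L2 < q" using o2 by simp
    then show False using orth_unique[OF o2(1)] n2 by blast
  qed
  then have c2: "coeff L2 q \<noteq> 0" using n2 by (metis leading_coeff_0_iff)
  define D where "D = L1 - smult (coeff L1 q / coeff L2 q) L2"
  have "orth q D" using o1(1) o2(1) unfolding orth_def D_def
    by (simp add: algebra_simps PI_diff PI_smult)
  moreover have "degree D < q \<or> D = 0"
  proof -
    have dD: "degree D \<le> q" unfolding D_def using o1(2) d2
      by (meson degree_diff_le degree_smult_le le_trans)
    have "coeff D q = 0" unfolding D_def using c2 by simp
    then show ?thesis using dD by (metis le_neq_implies_less leading_coeff_0_iff)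
  qed
  ultimately have "D = 0" using orth_unique by blast
  then show ?thesis unfolding D_def by simp
qed

end

locale leg = ab +
  fixes q :: nat and L :: "real poly"
  assumes q1: "q \<ge> 1" and degL: "degree L \<le> q" and orthL: "orth q L"
begin

definition w :: "real poly" where "w = [:-(a*b), a+b, -1:]"
definition kap :: real where "kap = real (q * (q + 1))"

lemma kap_pos: "kap > 0" unfolding kap_def of_nat_0_less_iff using q1 by simp

lemma poly_w: "poly w t = (t - a) * (b - t)"
  by (simp add: w_def algebra_simps)

lemma w_end[simp]: "poly w a = 0" "poly w b = 0"
  by (simp_all add: poly_w)

lemma degree_w: "degree w \<le> 2"
  by (simp add: w_def)

lemma orth_mono: "PI (L * r) = 0" if "degree r < q" for r
  using orthL that unfolding orth_def by blast

lemma ODE: "pderiv (w * pderiv L) = smult (- kap) L"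
proof -
  define R where "R = pderiv (w * pderiv L) + smult kap L"
  have orthR: "orth q R"
    unfolding orth_def
  proof (intro allI impI)
    fix r :: "real poly" assume r: "degree r < q"
    have deg: "degree (pderiv (w * pderiv r)) < q"
    proof (cases "degree r = 0")
      case True
      then have "pderiv r = 0" by (simp add: pderiv_eq_0_iff)
      then show ?thesis using q1 by simp
    next
      case False
      have "degree (w * pderiv r) \<le> degree w + degree (pderiv r)" by (rule degree_mult_le)
      also have "\<dots> \<le> 2 + (degree r - 1)" using degree_w by (simp add: degree_pderiv)
      finally have "degree (w * pderiv r) \<le> degree r + 1" using False by linarith
      then have "degree (pderiv (w * pderiv r)) \<le> degree r" by (simp add: degree_pderiv)
      then show ?thesis using r by simp
    qed
    have "PI (pderiv (w * pderiv L) * r) = - PI ((w * pderiv L) * pderiv r)"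
      using parts[of "w * pderiv L" r] by simp
    also have "(w * pderiv L) * pderiv r = pderiv L * (w * pderiv r)" by (simp add: mult_ac)
    also have "PI (pderiv L * (w * pderiv r)) = - PI (L * pderiv (w * pderiv r))"
      using parts[of L "w * pderiv r"] by simp
    finally have "PI (pderiv (w * pderiv L) * r) = 0" using orth_mono[OF deg] by simp
    then show "PI (R * r) = 0" unfolding R_def
      by (simp add: distrib_right PI_add PI_smult orth_mono[OF r])
  qed
  obtain q' where q': "q = Suc q'" using q1 by (cases q) auto
  have L1: "coeff L (Suc q) = 0" "coeff L (Suc (Suc q)) = 0" using degL by (simp_all add: coeff_eq_0)
  have cq: "coeff R q = 0"
    using L1 unfolding R_def w_def kap_def unfolding q'
    by (simp add: coeff_pderiv algebra_simps)
  have dR: "degree R \<le> q"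
  proof -
    have "degree (w * pderiv L) \<le> degree w + degree (pderiv L)" by (rule degree_mult_le)
    also have "\<dots> \<le> 2 + (q - 1)" using degree_w degL by (simp add: degree_pderiv)
    finally have "degree (pderiv (w * pderiv L)) \<le> q" using q1 by (simp add: degree_pderiv)
    then show ?thesis unfolding R_def using degL
      by (meson degree_add_le degree_smult_le le_trans)
  qed
  have "degree R < q \<or> R = 0" using cq dR by (metis le_neq_implies_less leading_coeff_0_iff)
  then have "R = 0" using orth_unique[OF orthR] by blast
  then show ?thesis unfolding R_def by (simp add: eq_neg_iff_add_eq_0)
qed


definition Fp :: "real poly" where "Fp = smult kap (L * L) + w * (pderiv L * pderiv L)"

lemma Fp_deriv: "pderiv Fp = - (pderiv w * pderiv L * pderiv L)"
proof -
  let ?M = "pderiv L" and ?N = "pderiv (pderiv L)"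
  show ?thesis
  proof (rule poly_ext)
    fix x
    have K: "kap * poly L x = - (poly (pderiv w) x * poly ?M x + poly w x * poly ?N x)"
      using arg_cong[OF ODE, of "\<lambda>p. poly p x"] by (simp add: pderiv_mult algebra_simps)
    have "poly (pderiv Fp) x = 2 * poly ?M x * (kap * poly L x) + poly (pderiv w) x * poly ?M x * poly ?M x
        + 2 * poly w x * poly ?M x * poly ?N x"
      unfolding Fp_def by (simp add: pderiv_mult pderiv_add pderiv_smult algebra_simps)
    also have "\<dots> = poly (- (pderiv w * ?M * ?M)) x" unfolding K by (simp add: algebra_simps)
    finally show "poly (pderiv Fp) x = poly (- (pderiv w * ?M * ?M)) x" .
  qed
qed

lemma poly_pderiv_w: "poly (pderiv w) t = a + b - 2 * t"
  by (simp add: w_def pderiv_pCons)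

lemma Fp_bound:
  assumes t: "t \<in> {a..b}"
  shows "poly Fp t \<le> max (poly Fp a) (poly Fp b)"
proof (cases "t \<le> (a + b) / 2")
  case True
  have "poly Fp t \<le> poly Fp a"
  proof (rule DERIV_nonpos_imp_nonincreasing[where f="poly Fp"])
    show "a \<le> t" using t by simp
    fix x assume x: "a \<le> x" "x \<le> t"
    have "poly (pderiv Fp) x = - ((a + b - 2 * x) * (poly (pderiv L) x * poly (pderiv L) x))"
      by (simp add: Fp_deriv poly_pderiv_w algebra_simps)
    moreover have "0 \<le> (a + b - 2 * x) * (poly (pderiv L) x * poly (pderiv L) x)"
      by (rule mult_nonneg_nonneg) (use True x in auto)
    ultimately show "\<exists>y. DERIV (poly Fp) x :> y \<and> y \<le> 0"
      by (intro exI[of _ "poly (pderiv Fp) x"] conjI poly_DERIV) linarith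
  qed
  then show ?thesis by simp
next
  case False
  have "poly Fp t \<le> poly Fp b"
  proof (rule DERIV_nonneg_imp_nondecreasing[where f="poly Fp"])
    show "t \<le> b" using t by simp
    fix x assume x: "t \<le> x" "x \<le> b"
    have "poly (pderiv Fp) x = (2 * x - a - b) * (poly (pderiv L) x * poly (pderiv L) x)"
      by (simp add: Fp_deriv poly_pderiv_w algebra_simps)
    moreover have "0 \<le> (2 * x - a - b) * (poly (pderiv L) x * poly (pderiv L) x)"
      by (rule mult_nonneg_nonneg) (use False x in auto)
    ultimately show "\<exists>y. DERIV (poly Fp) x :> y \<and> y \<ge> 0"
      by (intro exI[of _ "poly (pderiv Fp) x"] conjI poly_DERIV) linarith
  qed
  then show ?thesis by simp
qed

lemma Fp_end: "poly Fp a = kap * (poly L a)\<^sup>2" "poly Fp b = kap * (poly L b)\<^sup>2"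
  by (simp_all add: Fp_def power2_eq_square)

lemma parity: "poly L a = (-1) ^ q * poly L b"
proof (cases "L = 0")
  case True then show ?thesis by simp
next
  case False
  have dL: "degree L = q"
  proof (rule ccontr)
    assume "degree L \<noteq> q" then have "degree L < q" using degL by simp
    then show False using orth_unique[OF orthL] False by blast
  qed
  let ?r = "[:a + b, -1:] :: real poly"
  have rr: "pcompose ?r ?r = [:0, 1:]" by (simp add: pcompose_pCons)
  define Lt where "Lt = pcompose L ?r"
  have orthLt: "orth q Lt" unfolding orth_def
  proof (intro allI impI)
    fix r :: "real poly" assume r: "degree r < q"
    have "pcompose (pcompose r ?r) ?r = r" by (simp add: pcompose_assoc[symmetric] rr)
    then have "Lt * r = pcompose (L * pcompose r ?r) ?r"
      unfolding Lt_def by (simp add: pcompose_mult)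
    then have "PI (Lt * r) = PI (L * pcompose r ?r)" by (simp add: PI_reflect)
    also have "\<dots> = 0" using orth_mono r by (simp add: degree_pcompose)
    finally show "PI (Lt * r) = 0" .
  qed
  have dLt: "degree Lt = q" unfolding Lt_def by (simp add: degree_pcompose dL)
  have cLt: "coeff Lt q = (-1) ^ q * coeff L q"
    using lead_coeff_comp[of ?r L] dL dLt unfolding Lt_def by simp
  define D where "D = Lt - smult ((-1) ^ q) L"
  have "orth q D" using orthLt orthL unfolding orth_def D_def
    by (simp add: algebra_simps PI_diff PI_smult)
  moreover have "degree D < q \<or> D = 0"
  proof -
    have dD: "degree D \<le> q" unfolding D_def
      by (rule degree_diff_le) (simp_all add: dLt degL)
    have "coeff D q = 0" unfolding D_def using cLt by simp
    then show ?thesis using dD by (metis le_neq_implies_less leading_coeff_0_iff)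
  qed
  ultimately have "D = 0" using orth_unique by blast
  then have "poly Lt b = (-1) ^ q * poly L b" unfolding D_def by simp
  then show ?thesis unfolding Lt_def by (simp add: poly_pcompose)
qed

lemma parity2: "(poly L a)\<^sup>2 = (poly L b)\<^sup>2"
  using parity by (simp add: power_mult_distrib power2_eq_square[of "(-1::real) ^ q"] flip: power_mult)

lemma L2_ident: "(2 * real q + 1) * PI (L * L) = (b - a) * (poly L b)\<^sup>2"
proof -
  let ?s = "[:-(a + b) / 2, 1:] :: real poly"
  define E where "E = ?s * pderiv L - smult (real q) L"
  have dE: "degree E < q \<or> E = 0"
  proof -
    obtain q' where q': "q = Suc q'" using q1 by (cases q) auto
    have L1: "coeff L (Suc q) = 0" using degL by (simp add: coeff_eq_0)
    have "coeff E q = 0" unfolding E_def using L1 unfolding q'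
      by (simp add: coeff_pderiv algebra_simps)
    moreover have "degree E \<le> q"
    proof -
      have "degree (?s * pderiv L) \<le> degree ?s + degree (pderiv L)" by (rule degree_mult_le)
      also have "\<dots> \<le> 1 + (q - 1)" using degL by (simp add: degree_pderiv)
      finally have "degree (?s * pderiv L) \<le> q" using q1 by simp
      then show ?thesis unfolding E_def using degL
        by (meson degree_diff_le degree_smult_le le_trans)
    qed
    ultimately show ?thesis by (metis le_neq_implies_less leading_coeff_0_iff)
  qed
  have PE: "PI (L * E) = 0" using dE orth_mono by (cases "E = 0") (auto simp: PI_zero)
  have "pderiv (?s * (L * L)) = smult (2 * real q + 1) (L * L) + smult 2 (L * E)"
  proof (rule poly_ext)
    fix x show "poly (pderiv (?s * (L * L))) x = poly (smult (2 * real q + 1) (L * L) + smult 2 (L * E)) x"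
      unfolding E_def by (simp add: pderiv_mult pderiv_pCons pderiv_add pderiv_smult algebra_simps)
  qed
  then have "PI (pderiv (?s * (L * L))) = (2 * real q + 1) * PI (L * L)"
    using PE by (simp add: PI_add PI_smult)
  moreover have "PI (pderiv (?s * (L * L))) = (b - a) * (poly L b)\<^sup>2"
    using FTC[of "?s * (L * L)"] parity2 by (simp add: power2_eq_square algebra_simps)
  ultimately show ?thesis by simp
qed


definition Lp :: "real poly" where "Lp = smult (- 1 / kap) (w * pderiv L)"

lemma pderiv_Lp: "pderiv Lp = L"
  unfolding Lp_def using kap_pos by (simp add: pderiv_smult pderiv_minus ODE)

lemma Lp_end[simp]: "poly Lp a = 0" "poly Lp b = 0"
  by (simp_all add: Lp_def)

lemma Lam_formula:
  assumes "t \<in> {a..b}"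
  shows "integral {a..t} (poly L) = poly Lp t"
  using ftc_poly[of a t Lp] assms unfolding pderiv_Lp by simp

lemma Lam_b: "integral {a..b} (poly L) = 0"
  using Lam_formula[of b] ab by simp

lemma Lam_orth:
  assumes j: "j + 2 \<le> q"
  shows "integral {a..b} (\<lambda>t. integral {a..t} (poly L) * t ^ j) = 0"
proof -
  have "integral {a..b} (\<lambda>t. integral {a..t} (poly L) * t ^ j) = integral {a..b} (poly (Lp * monom 1 j))"
    by (rule integral_cong) (simp add: Lam_formula poly_monom)
  also have "\<dots> = PI (pderiv (monom (1 / real (Suc j)) (Suc j)) * Lp)"
    unfolding PI_def by (simp add: pderiv_monom mult.commute del: of_nat_Suc)
  also have "\<dots> = - PI (monom (1 / real (Suc j)) (Suc j) * L)"
    using parts[of "monom (1 / real (Suc j)) (Suc j)" Lp] by (simp add: pderiv_Lp)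
  also have "PI (monom (1 / real (Suc j)) (Suc j) * L) = 0"
    using orth_mono[of "monom (1 / real (Suc j)) (Suc j)"] j by (simp add: degree_monom_eq mult.commute)
  finally show ?thesis by simp
qed

lemma Lam_abs:
  assumes t: "t \<in> {a..b}"
  shows "\<bar>integral {a..t} (poly L)\<bar> \<le> integral {a..b} (\<lambda>s. \<bar>poly L s\<bar>)"
proof -
  have i1: "(\<lambda>s. \<bar>poly L s\<bar>) integrable_on {a..t}"
    by (intro integrable_continuous_interval continuous_intros)
  have i2: "(\<lambda>s. \<bar>poly L s\<bar>) integrable_on {a..b}"
    by (intro integrable_continuous_interval continuous_intros)
  have "\<bar>integral {a..t} (poly L)\<bar> \<le> integral {a..t} (\<lambda>s. \<bar>poly L s\<bar>)"
    using integral_norm_bound_integral[OF pint[of L a t] i1] by simp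
  also have "\<dots> \<le> integral {a..b} (\<lambda>s. \<bar>poly L s\<bar>)"
    by (rule integral_subset_le[OF _ i1 i2]) (use t in auto)
  finally show ?thesis .
qed

lemma PI_LL_nonneg: "0 \<le> PI (L * L)"
  unfolding PI_def by (rule integral_nonneg) (auto intro: pint)

lemma Lam_sq_general:
  assumes t: "t \<in> {a..b}"
  shows "(poly Lp t)\<^sup>2 \<le> (b - a) * (2 * real q + 1) * PI (L * L) / (4 * kap)"
proof -
  let ?W = "poly w t" and ?M = "poly (pderiv L) t"
  have W0: "0 \<le> ?W" using t by (simp add: poly_w)
  have W1: "?W \<le> (b - a)\<^sup>2 / 4"
  proof -
    have "(b - a)\<^sup>2 / 4 - ?W = (t - (a + b) / 2)\<^sup>2" by (simp add: poly_w power2_eq_square field_simps)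
    then show ?thesis by (metis diff_ge_0_iff_ge zero_le_power2)
  qed
  have F: "poly Fp t \<le> kap * (poly L b)\<^sup>2"
    using Fp_bound[OF t] Fp_end parity2 by simp
  have WM: "?W * ?M\<^sup>2 \<le> kap * (poly L b)\<^sup>2"
  proof -
    have "poly Fp t = kap * (poly L t)\<^sup>2 + ?W * ?M\<^sup>2" by (simp add: Fp_def power2_eq_square)
    moreover have "0 \<le> kap * (poly L t)\<^sup>2" using kap_pos by simp
    ultimately show ?thesis using F by linarith
  qed
  have "(poly Lp t)\<^sup>2 = ?W * (?W * ?M\<^sup>2) / kap\<^sup>2"
    by (simp add: Lp_def power2_eq_square field_simps)
  also have "\<dots> \<le> ?W * (kap * (poly L b)\<^sup>2) / kap\<^sup>2"
    using kap_pos W0 WM by (intro divide_right_mono mult_left_mono) auto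
  also have "\<dots> = ?W * (poly L b)\<^sup>2 / kap" using kap_pos by (simp add: power2_eq_square)
  also have "\<dots> \<le> (b - a)\<^sup>2 / 4 * (poly L b)\<^sup>2 / kap"
    using kap_pos W1 by (intro divide_right_mono mult_right_mono) auto
  also have "(b - a)\<^sup>2 / 4 * (poly L b)\<^sup>2 / kap = (b - a) * ((b - a) * (poly L b)\<^sup>2) / (4 * kap)"
    by (simp add: power2_eq_square)
  also have "\<dots> = (b - a) * (2 * real q + 1) * PI (L * L) / (4 * kap)"
    using L2_ident by simp
  finally show ?thesis .
qed


lemma Lam_sq:
  assumes t: "t \<in> {a..b}"
  shows "(integral {a..t} (poly L))\<^sup>2 \<le> Cqstar q * (b - a) * PI (L * L)"
proof (cases "q = 1")
  case False
  then have q2: "q \<ge> 2" using q1 by simp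
  let ?s = "sqrt (real (q - 1) * real q)"
  have s0: "0 < ?s" using q2 by simp
  have sq: "?s \<le> real q"
  proof -
    have "real (q - 1) * real q \<le> real q * real q" using q2 by (intro mult_right_mono) auto
    then have "?s \<le> sqrt (real q * real q)" by (rule real_sqrt_le_mono)
    then show ?thesis by simp
  qed
  have C: "Cqstar q = 1 / (2 * ?s)" using False by (simp add: Cqstar_def)
  have key: "(2 * real q + 1) / (4 * kap) \<le> Cqstar q"
  proof -
    have "(2 * real q + 1) * ?s \<le> (2 * real q + 1) * real q" using sq by (intro mult_left_mono) auto
    also have "\<dots> \<le> 2 * real q * (real q + 1)" by (simp add: algebra_simps)
    finally have h: "(2 * real q + 1) * (2 * ?s) \<le> 4 * kap" unfolding kap_def by (simp add: algebra_simps)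
    have s0': "0 < 2 * ?s" using s0 by linarith
    have h2: "2 * real q + 1 \<le> 4 * kap / (2 * ?s)"
      by (simp only: pos_le_divide_eq[OF s0']) (use h in simp)
    have "(2 * real q + 1) / (4 * kap) \<le> (4 * kap / (2 * ?s)) / (4 * kap)"
      using kap_pos h2 by (intro divide_right_mono) auto
    also have "\<dots> = 1 / (2 * ?s)" using kap_pos by simp
    finally show ?thesis unfolding C .
  qed
  have "(integral {a..t} (poly L))\<^sup>2 = (poly Lp t)\<^sup>2" using Lam_formula[OF t] by simp
  also have "\<dots> \<le> (b - a) * (2 * real q + 1) * PI (L * L) / (4 * kap)" by (rule Lam_sq_general[OF t])
  also have "\<dots> = ((2 * real q + 1) / (4 * kap)) * ((b - a) * PI (L * L))" by simp
  also have "\<dots> \<le> Cqstar q * ((b - a) * PI (L * L))"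
    using key ab PI_LL_nonneg by (intro mult_right_mono) auto
  finally show ?thesis by (simp add: mult_ac)
next
  case True
  have Lrep: "L = [:coeff L 0, coeff L 1:]"
  proof (rule poly_eqI)
    fix n show "coeff L n = coeff [:coeff L 0, coeff L 1:] n"
      using degL True by (cases n; cases "n - 1") (auto simp: coeff_eq_0 coeff_pCons split: nat.splits)
  qed
  define c0 where "c0 = coeff L 0"
  define c1 where "c1 = coeff L 1"
  have L01: "L = [:c0, c1:]" using Lrep c0_def c1_def by simp
  have k2: "kap = 2" unfolding kap_def using True by simp
  have par: "c0 + c1 * a = - (c0 + c1 * b)" using parity True L01 by (simp add: algebra_simps)
  have Lb: "c0 + c1 * b = c1 * (b - a) / 2" using par by (simp add: field_simps)
  have PLb: "poly L b = c1 * (b - a) / 2" using Lb by (subst L01) (simp add: algebra_simps)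
  have PI: "3 * PI (L * L) = (b - a) * (c1 * (b - a) / 2)\<^sup>2"
    using L2_ident True unfolding PLb by simp
  let ?W = "poly w t"
  have W0: "0 \<le> ?W" using t by (simp add: poly_w)
  have W1: "?W \<le> (b - a)\<^sup>2 / 4"
  proof -
    have "(b - a)\<^sup>2 / 4 - ?W = (t - (a + b) / 2)\<^sup>2" by (simp add: poly_w power2_eq_square field_simps)
    then show ?thesis by (metis diff_ge_0_iff_ge zero_le_power2)
  qed
  have "(integral {a..t} (poly L))\<^sup>2 = (poly Lp t)\<^sup>2" using Lam_formula[OF t] by simp
  also have "\<dots> = ?W\<^sup>2 * c1\<^sup>2 / 4"
  proof -
    have pdL: "poly (pderiv L) t = c1" by (subst L01) (simp add: pderiv_pCons)
    have "poly Lp t = - (?W * c1) / 2" unfolding Lp_def k2 using pdL by simp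
    then show ?thesis by (simp add: power2_eq_square)
  qed
  also have "\<dots> \<le> ((b - a)\<^sup>2 / 4)\<^sup>2 * c1\<^sup>2 / 4"
    using W0 W1 by (intro divide_right_mono mult_right_mono power_mono) auto
  also have "\<dots> = (b - a) ^ 4 * c1\<^sup>2 / 64" by (simp add: power2_eq_square power4_eq_xxxx)
  also have "\<dots> \<le> (b - a) ^ 4 * c1\<^sup>2 / (12 * pi)"
  proof (rule divide_left_mono)
    show "12 * pi \<le> 64" using pi_less_4 by simp
    show "0 \<le> (b - a) ^ 4 * c1\<^sup>2" using ab by simp
    show "0 < 64 * (12 * pi)" using pi_gt_zero by simp
  qed
  also have "\<dots> = Cqstar q * (b - a) * PI (L * L)"
  proof -
    have PIe: "PI (L * L) = (b - a) * (c1 * (b - a) / 2)\<^sup>2 / 3" using PI by simp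
    have Cq: "Cqstar q = 1 / pi" using True by (simp add: Cqstar_def)
    show ?thesis unfolding PIe Cq by (simp add: power2_eq_square power4_eq_xxxx field_simps)
  qed
  finally show ?thesis .
qed

end

lemma part_mono:
  assumes "time_partition tn N T" "i \<le> j" "j \<le> N"
  shows "tn i \<le> tn j"
  using assms(2,3)
proof (induction j)
  case 0 then show ?case by simp
next
  case (Suc j)
  show ?case
  proof (cases "i = Suc j")
    case True then show ?thesis by simp
  next
    case False
    then have "tn i \<le> tn j" using Suc by simp
    also have "tn j < tn (Suc j)" using assms(1) Suc.prems unfolding time_partition_def by auto
    finally show ?thesis by simp
  qed
qed

lemma part_strict:
  assumes "time_partition tn N T" "i < j" "j \<le> N"
  shows "tn i < tn j"
proof -
  have "tn i < tn (Suc i)" using assms unfolding time_partition_def by auto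
  also have "tn (Suc i) \<le> tn j" using part_mono[OF assms(1)] assms by simp
  finally show ?thesis .
qed

lemma part_cover:
  assumes P: "time_partition tn N T" and t: "t \<in> {0..T}"
  shows "\<exists>n\<in>{1..N}. t \<in> {tn (n - 1)..tn n}"
proof -
  have N1: "N \<ge> 1" and t0: "tn 0 = 0" and tN: "tn N = T" using P unfolding time_partition_def by auto
  define n where "n = (LEAST n. t \<le> tn n)"
  have ex: "t \<le> tn N" using t tN by simp
  have tn: "t \<le> tn n" unfolding n_def by (rule LeastI[of _ N]) (use ex in auto)
  have nN: "n \<le> N" unfolding n_def by (rule Least_le) (use ex in auto)
  show ?thesis
  proof (cases "n = 0")
    case True
    then have "t = 0" using tn t t0 by simp
    moreover have "tn 0 \<le> tn 1" using part_mono[OF P, of 0 1] N1 by simp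
    ultimately show ?thesis using N1 t0 by (intro bexI[of _ 1]) auto
  next
    case False
    have "\<not> t \<le> tn (n - 1)" unfolding n_def using False n_def not_less_Least[of "n - 1" "\<lambda>n. t \<le> tn n"]
      by simp
    then show ?thesis using False nN tn by (intro bexI[of _ n]) auto
  qed
qed

lemma part_disj:
  assumes P: "time_partition tn N T" and n: "n \<in> {1..N}" and n': "n' \<in> {1..N}" and ne: "n \<noteq> n'"
    and t: "t \<in> {tn (n' - 1)<..<tn n'}"
  shows "t \<notin> {tn (n - 1)<..<tn n}"
proof (cases "n' < n")
  case True
  then have "tn n' \<le> tn (n - 1)" using part_mono[OF P, of n' "n - 1"] n by simp
  then show ?thesis using t by auto
next
  case False
  then have "n < n'" using ne by simp
  then have "tn n \<le> tn (n' - 1)" using part_mono[OF P, of n "n' - 1"] n' by simp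
  then show ?thesis using t by auto
qed

lemma LINT_Ioo:
  fixes f :: "real \<Rightarrow> real"
  assumes "continuous_on {a..b} f"
  shows "set_integrable lborel {a<..<b} f" "(LINT t:{a<..<b}|lborel. f t) = integral {a..b} f"
proof -
  have i: "set_integrable lborel {a..b} f" using borel_integrable_atLeastAtMost'[OF assms] .
  show si: "set_integrable lborel {a<..<b} f" by (rule set_integrable_subset[OF i]) auto
  have "(LINT t:{a<..<b}|lborel. f t) = integral {a<..<b} f" using set_borel_integral_eq_integral(2)[OF si] .
  also have "\<dots> = integral {a..b} f" using integral_open_interval_real[of a b f] by simp
  finally show "(LINT t:{a<..<b}|lborel. f t) = integral {a..b} f" .
qed

lemma setint_cont:
  fixes f :: "'a::euclidean_space \<Rightarrow> real"
  assumes "bounded \<Omega>" "open \<Omega>" "continuous_on UNIV f"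
  shows "set_integrable lborel \<Omega> f"
proof -
  have "set_integrable lborel (closure \<Omega>) f"
    unfolding set_integrable_def
    by (rule borel_integrable_compact) (use assms compact_closure continuous_on_subset in auto)
  then show ?thesis by (rule set_integrable_subset) (use assms closure_subset in auto)
qed

lemma grad_const0: "grad (\<lambda>y. 0) x = (0 :: 'a::euclidean_space)"
proof -
  have "((\<lambda>y::'a. 0::real) has_derivative (\<lambda>h. 0)) (at x)" by simp
  then have "frechet_derivative (\<lambda>y::'a. 0::real) (at x) = (\<lambda>h. 0)" by (rule frechet_derivative_at[symmetric])
  then show ?thesis unfolding grad_def by simp
qed

context spat
begin

lemma QInt_z:
  fixes \<theta> :: "nat \<Rightarrow> 'a \<Rightarrow> real" and W :: "'a \<Rightarrow> real \<Rightarrow> real"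
  assumes ab: "0 \<le> a" "a < b" "b \<le> T"
    and th: "\<forall>k\<le>q. \<theta> k \<in> Vh0 \<Omega> Th p" and W: "\<forall>t\<in>{a<..<b}. \<forall>y. W y t = (\<Sum>k\<le>q. \<theta> k y * t ^ k)"
    and m: "m \<in> Vh0 \<Omega> Th p"
  shows "QInt \<Omega> 0 T (\<lambda>x t. (c x)\<^sup>2 * (grad (\<lambda>y. W y t) x \<bullet> grad (\<lambda>y. if t \<in> {a<..<b} then t ^ j * m y else 0) x))
       = (\<Sum>k\<le>q. Sg (\<theta> k) m * integral {a..b} (\<lambda>t. t ^ (k + j)))"
proof -
  define g where "g t = (\<Sum>k\<le>q. Sg (\<theta> k) m * t ^ (k + j))" for t
  have inner: "(LINT x:\<Omega>|lborel. (c x)\<^sup>2 * (grad (\<lambda>y. W y t) x \<bullet> grad (\<lambda>y. if t \<in> {a<..<b} then t ^ j * m y else 0) x))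
      = indicator {a<..<b} t * g t" for t
  proof (cases "t \<in> {a<..<b}")
    case True
    have e1: "(\<lambda>y. W y t) = (\<lambda>y. \<Sum>k\<in>{..q}. (\<lambda>k. t ^ k) k * \<theta> k y)"
      using W True by (auto simp: mult.commute)
    have e2: "(\<lambda>y. if t \<in> {a<..<b} then t ^ j * m y else 0) = (\<lambda>y. \<Sum>l\<in>{0::nat}. (\<lambda>l. t ^ j) l * (\<lambda>l. m) l y)"
      using True by simp
    have "(LINT x:\<Omega>|lborel. (c x)\<^sup>2 * (grad (\<lambda>y. W y t) x \<bullet> grad (\<lambda>y. if t \<in> {a<..<b} then t ^ j * m y else 0) x))
        = (LINT x|lborel. (cc x)\<^sup>2 * (grad (\<lambda>y. \<Sum>k\<in>{..q}. (\<lambda>k. t ^ k) k * \<theta> k y) x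
             \<bullet> grad (\<lambda>y. \<Sum>l\<in>{0::nat}. (\<lambda>l. t ^ j) l * (\<lambda>l. m) l y) x))"
      unfolding setint_cc e1 e2 ..
    also have "\<dots> = (\<Sum>k\<in>{..q}. \<Sum>l\<in>{0::nat}. t ^ k * t ^ j * Sg (\<theta> k) m)"
      by (rule bilin) (use th m in auto)
    also have "\<dots> = g t" unfolding g_def by (simp add: power_add mult_ac)
    finally show ?thesis using True by simp
  next
    case False
    then have "(\<lambda>y. if t \<in> {a<..<b} then t ^ j * m y else 0) = (\<lambda>y. 0)" by (intro ext) auto
    then show ?thesis using False by (simp add: grad_const0)
  qed
  have "QInt \<Omega> 0 T (\<lambda>x t. (c x)\<^sup>2 * (grad (\<lambda>y. W y t) x \<bullet> grad (\<lambda>y. if t \<in> {a<..<b} then t ^ j * m y else 0) x))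
      = (LINT t:{0<..<T}|lborel. indicator {a<..<b} t * g t)"
    unfolding QInt_def inner ..
  also have "\<dots> = (LINT t:{a<..<b}|lborel. g t)"
    unfolding set_lebesgue_integral_def
    by (rule Bochner_Integration.integral_cong) (use ab in \<open>auto simp: indicator_def\<close>)
  also have "\<dots> = integral {a..b} g"
    by (rule LINT_Ioo(2)) (unfold g_def, intro continuous_intros)
  also have "\<dots> = (\<Sum>k\<le>q. Sg (\<theta> k) m * integral {a..b} (\<lambda>t. t ^ (k + j)))"
    unfolding g_def
    by (subst integral_sum) (auto intro!: integrable_continuous_interval continuous_intros)
  finally show ?thesis .
qed

end

definition mkP :: "nat \<Rightarrow> (nat \<Rightarrow> 'a \<Rightarrow> real) \<Rightarrow> 'a \<Rightarrow> real poly" where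
  "mkP q \<phi> x = (\<Sum>j\<le>q. monom (\<phi> j x) j)"

lemma coeff_mkP: "coeff (mkP q \<phi> x) k = (if k \<le> q then \<phi> k x else 0)"
  unfolding mkP_def by (simp add: coeff_sum coeff_monom)

lemma poly_mkP: "poly (mkP q \<phi> x) t = (\<Sum>j\<le>q. t ^ j * \<phi> j x)"
  unfolding mkP_def by (simp add: poly_sum poly_monom mult.commute)

lemma degree_mkP: "degree (mkP q \<phi> x) \<le> q"
  unfolding mkP_def by (intro degree_sum_le) (auto simp: degree_monom_le intro: le_trans[OF degree_monom_le])

lemma poly_le_sum:
  fixes P :: "real poly"
  assumes "degree P \<le> q" shows "poly P t = (\<Sum>k\<le>q. coeff P k * t ^ k)"
proof -
  have "poly P t = poly (\<Sum>i\<le>q. monom (coeff P i) i) t" using poly_as_sum_of_monoms'[OF assms] by simp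
  also have "\<dots> = (\<Sum>k\<le>q. coeff P k * t ^ k)" by (simp add: poly_sum poly_monom)
  finally show ?thesis .
qed

context spat
begin

lemma Sg_lin:
  fixes f :: "nat \<Rightarrow> 'a \<Rightarrow> real"
  assumes "finite I" "\<And>k. k \<in> I \<Longrightarrow> f k \<in> Vh0 \<Omega> Th p" "m \<in> Vh0 \<Omega> Th p"
  shows "Sg (\<lambda>x. \<Sum>k\<in>I. a k * f k x) m = (\<Sum>k\<in>I. a k * Sg (f k) m)"
proof -
  have "Sg (\<lambda>x. \<Sum>k\<in>I. a k * f k x) m
      = (LINT x|lborel. (cc x)\<^sup>2 * (grad (\<lambda>y. \<Sum>k\<in>I. a k * f k y) x \<bullet> grad (\<lambda>y. \<Sum>l\<in>{0::nat}. (\<lambda>l. 1) l * (\<lambda>l. m) l y) x))"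
    unfolding Sg_def by simp
  also have "\<dots> = (\<Sum>k\<in>I. \<Sum>l\<in>{0::nat}. a k * 1 * Sg (f k) m)"
    by (rule bilin) (use assms in auto)
  finally show ?thesis by simp
qed

lemma Sg_diff:
  assumes "f \<in> Vh0 \<Omega> Th p" "g \<in> Vh0 \<Omega> Th p" "m \<in> Vh0 \<Omega> Th p"
  shows "Sg (\<lambda>x. f x - g x) m = Sg f m - Sg g m"
proof -
  have "Sg (\<lambda>x. \<Sum>k\<in>{0::nat, 1}. (\<lambda>k. if k = 0 then 1 else -1) k * (\<lambda>k. if k = 0 then f else g) k x) m
      = (\<Sum>k\<in>{0::nat, 1}. (\<lambda>k. if k = 0 then 1 else -1) k * Sg ((\<lambda>k. if k = 0 then f else g) k) m)"
    by (rule Sg_lin) (use assms in auto)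
  then show ?thesis by simp
qed

lemma interval_orth:
  fixes u v :: "'a \<Rightarrow> real \<Rightarrow> real" and \<phi>u \<phi>v :: "nat \<Rightarrow> 'a \<Rightarrow> real"
  assumes P: "time_partition tn N T" and n: "n \<in> {1..N}" and q1: "q \<ge> 1"
    and \<phi>u: "\<forall>j\<le>q. \<phi>u j \<in> Vh0 \<Omega> Th p" and uu: "\<forall>t\<in>{tn (n - 1)..tn n}. \<forall>x. u x t = (\<Sum>j\<le>q. t ^ j * \<phi>u j x)"
    and \<phi>v: "\<forall>j\<le>q. \<phi>v j \<in> Vh0 \<Omega> Th p" and vv: "\<forall>t\<in>{tn (n - 1)..tn n}. \<forall>x. v x t = (\<Sum>j\<le>q. t ^ j * \<phi>v j x)"
    and eq1: "\<forall>z\<in>Wht \<Omega> Th p tn N (q - 1).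
       QInt \<Omega> 0 T (\<lambda>x t. (c x)\<^sup>2 * (grad (\<lambda>y. v y t) x \<bullet> grad (\<lambda>y. z y t) x))
     - QInt \<Omega> 0 T (\<lambda>x t. (c x)\<^sup>2 * (grad (\<lambda>y. dt u y t) x \<bullet> grad (\<lambda>y. z y t) x)) = 0"
  shows "ab.orth (tn (n - 1)) (tn n) q (mkP q \<phi>v x - pderiv (mkP q \<phi>u x))"
proof -
  define a where "a = tn (n - 1)"
  define b where "b = tn n"
  have ab: "a < b" unfolding a_def b_def using part_strict[OF P, of "n - 1" n] n by auto
  have a0: "0 \<le> a" unfolding a_def using part_mono[OF P, of 0 "n - 1"] n P by (auto simp: time_partition_def)
  have bT: "b \<le> T" unfolding b_def using part_mono[OF P, of n N] n P by (auto simp: time_partition_def)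
  interpret ab a b using ab by unfold_locales
  define E where "E x = mkP q \<phi>v x - pderiv (mkP q \<phi>u x)" for x
  define \<theta>u where "\<theta>u k y = (if Suc k \<le> q then real (Suc k) * \<phi>u (Suc k) y else 0)" for k y
  define \<eta> where "\<eta> k y = \<phi>v k y - \<theta>u k y" for k y
  have \<theta>uV: "\<forall>k\<le>q. \<theta>u k \<in> Vh0 \<Omega> Th p"
  proof (intro allI impI)
    fix k assume "k \<le> q"
    show "\<theta>u k \<in> Vh0 \<Omega> Th p"
    proof (cases "Suc k \<le> q")
      case True
      then have "\<theta>u k = (\<lambda>y. real (Suc k) * \<phi>u (Suc k) y + 0 * \<phi>u (Suc k) y)" unfolding \<theta>u_def by auto
      then show ?thesis using Vh0_lin2 \<phi>u True by metis
    next
      case False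
      then have "\<theta>u k = (\<lambda>y. 0)" unfolding \<theta>u_def by auto
      then show ?thesis using Vh0_zero by metis
    qed
  qed
  have \<eta>V: "\<forall>k\<le>q. \<eta> k \<in> Vh0 \<Omega> Th p"
  proof (intro allI impI)
    fix k assume k: "k \<le> q"
    have "\<eta> k = (\<lambda>y. 1 * \<phi>v k y + (-1) * \<theta>u k y)" unfolding \<eta>_def by auto
    then show "\<eta> k \<in> Vh0 \<Omega> Th p" using Vh0_lin2 \<phi>v \<theta>uV k by metis
  qed
  have coeffE: "coeff (E x) k = \<eta> k x" if "k \<le> q" for x k
    unfolding E_def \<eta>_def \<theta>u_def using that by (simp add: coeff_pderiv coeff_mkP)
  have degE: "degree (E x) \<le> q" for x
    unfolding E_def using degree_mkP[of q \<phi>v x] degree_mkP[of q \<phi>u x]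
    by (intro degree_diff_le) (auto simp: degree_pderiv)
  have Erep: "E x = (\<Sum>k\<le>q. monom (\<eta> k x) k)" for x
    using poly_as_sum_of_monoms'[OF degE[of x]] coeffE by simp
  define \<mu> where "\<mu> i = integral {a..b} (\<lambda>t. t ^ i)" for i
  have PImon: "PI (monom c i) = c * \<mu> i" for c i
  proof -
    have "poly (monom c i) = (\<lambda>t. c * t ^ i)" by (auto simp: poly_monom fun_eq_iff)
    then show ?thesis unfolding PI_def \<mu>_def by simp
  qed
  define m where "m j x = (\<Sum>k\<le>q. \<eta> k x * \<mu> (k + j))" for j x
  have PIm: "PI (E x * monom 1 j) = m j x" for x j
  proof -
    have "E x * monom 1 j = (\<Sum>k\<le>q. monom (\<eta> k x) (k + j))"
      unfolding Erep by (simp add: sum_distrib_right mult_monom)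
    then show ?thesis unfolding m_def by (simp add: PI_sum PImon)
  qed
  have mV: "m j \<in> Vh0 \<Omega> Th p" for j
  proof -
    have "m j = (\<lambda>x. \<Sum>k\<in>{..q}. \<mu> (k + j) * \<eta> k x)" unfolding m_def by (auto simp: mult.commute)
    then show ?thesis using Vh0_sum[of "{..q}" \<eta> \<Omega> Th p "\<lambda>k. \<mu> (k + j)"] \<eta>V by auto
  qed
  have mz: "m j x = 0" if j: "j < q" for j
  proof -
    define z where "z = (\<lambda>y t. if t \<in> {a<..<b} then t ^ j * m j y else 0)"
    have zW: "z \<in> Wht \<Omega> Th p tn N (q - 1)"
      unfolding Wht_def
    proof (intro CollectI ballI)
      fix n' assume n': "n' \<in> {1..N}"
      show "\<exists>\<phi>. (\<forall>i\<le>q - 1. \<phi> i \<in> Vh0 \<Omega> Th p) \<and>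
          (\<forall>t\<in>{tn (n' - 1)<..<tn n'}. \<forall>x. z x t = (\<Sum>i\<le>q - 1. t ^ i * \<phi> i x))"
      proof (cases "n' = n")
        case True
        show ?thesis
        proof (intro exI[of _ "\<lambda>i. if i = j then m j else (\<lambda>y. 0)"] conjI ballI allI impI)
          fix i show "(if i = j then m j else (\<lambda>y. 0)) \<in> Vh0 \<Omega> Th p" using mV Vh0_zero by auto
        next
          fix t x assume t: "t \<in> {tn (n' - 1)<..<tn n'}"
          have "(\<Sum>i\<le>q - 1. t ^ i * (if i = j then m j else (\<lambda>y. 0)) x)
              = (\<Sum>i\<le>q - 1. if i = j then t ^ j * m j x else 0)"
            by (rule sum.cong) auto
          also have "\<dots> = t ^ j * m j x" using j by (simp add: sum.delta)
          finally have "(\<Sum>i\<le>q - 1. t ^ i * (if i = j then m j else (\<lambda>y. 0)) x) = t ^ j * m j x" .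
          then show "z x t = (\<Sum>i\<le>q - 1. t ^ i * (if i = j then m j else (\<lambda>y. 0)) x)"
            using t True unfolding z_def a_def b_def by simp
        qed
      next
        case False
        show ?thesis
        proof (intro exI[of _ "\<lambda>i. (\<lambda>y. 0)"] conjI ballI allI impI)
          fix i show "(\<lambda>y. 0) \<in> Vh0 \<Omega> Th p" using Vh0_zero by auto
        next
          fix t x assume t: "t \<in> {tn (n' - 1)<..<tn n'}"
          have "t \<notin> {a<..<b}" unfolding a_def b_def using part_disj[OF P n n' _ t] False by auto
          then show "z x t = (\<Sum>i\<le>q - 1. t ^ i * (\<lambda>y. 0) x)" unfolding z_def by auto
        qed
      qed
    qed
    have Wv: "\<forall>t\<in>{a<..<b}. \<forall>y. v y t = (\<Sum>k\<le>q. \<phi>v k y * t ^ k)"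
      using vv unfolding a_def b_def by (auto simp: mult.commute)
    have Wu: "\<forall>t\<in>{a<..<b}. \<forall>y. dt u y t = (\<Sum>k\<le>q. \<theta>u k y * t ^ k)"
    proof (intro ballI allI)
      fix t y assume t: "t \<in> {a<..<b}"
      have "((\<lambda>r. poly (mkP q \<phi>u y) r) has_field_derivative poly (pderiv (mkP q \<phi>u y)) t) (at t)"
        by (rule poly_DERIV)
      then have "((\<lambda>r. u y r) has_field_derivative poly (pderiv (mkP q \<phi>u y)) t) (at t)"
        by (rule has_field_derivative_transform_within_open[where S="{a<..<b}"])
           (use t uu in \<open>auto simp: poly_mkP a_def b_def\<close>)
      then have "dt u y t = poly (pderiv (mkP q \<phi>u y)) t"
        unfolding dt_def by (rule DERIV_imp_deriv)
      also have "\<dots> = (\<Sum>k\<le>q. coeff (pderiv (mkP q \<phi>u y)) k * t ^ k)"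
        by (rule poly_le_sum) (use degree_mkP[of q \<phi>u y] in \<open>auto simp: degree_pderiv\<close>)
      also have "\<dots> = (\<Sum>k\<le>q. \<theta>u k y * t ^ k)"
        by (rule sum.cong) (auto simp: coeff_pderiv coeff_mkP \<theta>u_def)
      finally show "dt u y t = (\<Sum>k\<le>q. \<theta>u k y * t ^ k)" .
    qed
    have "QInt \<Omega> 0 T (\<lambda>x t. (c x)\<^sup>2 * (grad (\<lambda>y. v y t) x \<bullet> grad (\<lambda>y. z y t) x))
        - QInt \<Omega> 0 T (\<lambda>x t. (c x)\<^sup>2 * (grad (\<lambda>y. dt u y t) x \<bullet> grad (\<lambda>y. z y t) x)) = 0"
      using eq1 zW by blast
    then have "(\<Sum>k\<le>q. Sg (\<phi>v k) (m j) * integral {a..b} (\<lambda>t. t ^ (k + j)))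
        - (\<Sum>k\<le>q. Sg (\<theta>u k) (m j) * integral {a..b} (\<lambda>t. t ^ (k + j))) = 0"
      unfolding z_def
      using QInt_z[OF a0 ab bT _ Wv mV[of j], of j] QInt_z[OF a0 ab bT \<theta>uV Wu mV[of j], of j] \<phi>v
      by simp
    then have "(\<Sum>k\<le>q. \<mu> (k + j) * (Sg (\<phi>v k) (m j) - Sg (\<theta>u k) (m j))) = 0"
      unfolding \<mu>_def by (simp add: sum_subtractf[symmetric] algebra_simps)
    also have "(\<Sum>k\<le>q. \<mu> (k + j) * (Sg (\<phi>v k) (m j) - Sg (\<theta>u k) (m j))) = (\<Sum>k\<le>q. \<mu> (k + j) * Sg (\<eta> k) (m j))"
      unfolding \<eta>_def using Sg_diff \<phi>v \<theta>uV mV by (intro sum.cong) auto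
    also have "\<dots> = Sg (\<lambda>x. \<Sum>k\<le>q. \<mu> (k + j) * \<eta> k x) (m j)"
      by (rule Sg_lin[symmetric]) (use \<eta>V mV in auto)
    also have "(\<lambda>x. \<Sum>k\<le>q. \<mu> (k + j) * \<eta> k x) = m j" unfolding m_def by (auto simp: mult.commute)
    finally have "Sg (m j) (m j) = 0" .
    then show ?thesis using Sg_zero[OF mV] by blast
  qed
  have "orth q (E x)"
    by (rule orth_monom) (use PIm mz in auto)
  then show ?thesis unfolding E_def a_def b_def .
qed

end

lemma vcont:
  fixes v :: "real \<Rightarrow> real"
  assumes P: "time_partition tn N T"
    and V: "\<forall>n\<in>{1..N}. \<forall>t\<in>{tn (n - 1)..tn n}. v t = poly (Q n) t"
  shows "continuous_on {0..T} v"
proof -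
  have eq: "{0..T} = (\<Union>n\<in>{1..N}. {tn (n - 1)..tn n})"
  proof
    show "{0..T} \<subseteq> (\<Union>n\<in>{1..N}. {tn (n - 1)..tn n})" using part_cover[OF P] by blast
    show "(\<Union>n\<in>{1..N}. {tn (n - 1)..tn n}) \<subseteq> {0..T}"
    proof
      fix t assume "t \<in> (\<Union>n\<in>{1..N}. {tn (n - 1)..tn n})"
      then obtain n where n: "n \<in> {1..N}" "t \<in> {tn (n - 1)..tn n}" by blast
      have "tn 0 \<le> tn (n - 1)" using part_mono[OF P, of 0 "n - 1"] n by auto
      moreover have "tn n \<le> tn N" using part_mono[OF P, of n N] n by simp
      ultimately show "t \<in> {0..T}" using n P unfolding time_partition_def by auto
    qed
  qed
  show ?thesis unfolding eq
  proof (rule continuous_on_closed_Union)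
    fix n assume n: "n \<in> {1..N}"
    show "continuous_on {tn (n - 1)..tn n} v"
      by (rule continuous_on_cong[THEN iffD1, OF refl _ continuous_on_poly[OF continuous_on_id, of _ "Q n"]])
         (use V n in auto)
  qed auto
qed

lemma LINT_poly_eq:
  assumes "a < b" and g: "\<forall>r\<in>{a<..<b}. g r = poly G r"
  shows "(LINT r:{a<..<b}|lborel. (g r - poly Qp r) * r ^ j) = ab.PI a b ((G - Qp) * monom 1 j)"
proof -
  have "(LINT r:{a<..<b}|lborel. (g r - poly Qp r) * r ^ j) = (LINT r:{a<..<b}|lborel. poly ((G - Qp) * monom 1 j) r)"
    by (rule set_lebesgue_integral_cong) (use g in \<open>auto simp: poly_monom\<close>)
  also have "\<dots> = integral {a..b} (poly ((G - Qp) * monom 1 j))"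
    by (rule LINT_Ioo(2)) (intro continuous_intros)
  also have "\<dots> = ab.PI a b ((G - Qp) * monom 1 j)" using ab.PI_def[of a b] assms(1) by (simp add: ab_def)
  finally show ?thesis .
qed

lemma tproj_eq:
  assumes ab: "a < b" and q1: "q \<ge> 1" and g: "\<forall>r\<in>{a<..<b}. g r = poly G r"
    and P0: "degree P0 \<le> q - 1" and orth: "ab.orth a b q (G - P0)"
  shows "tproj (q - 1) a b g = poly P0"
proof -
  interpret ab a b using ab by unfold_locales
  have key: "(THE P. degree P \<le> q - 1 \<and> (\<forall>j\<le>q - 1. (LINT r:{a<..<b}|lborel. (g r - poly P r) * r ^ j) = 0)) = P0"
  proof (rule the_equality)
    show "degree P0 \<le> q - 1 \<and> (\<forall>j\<le>q - 1. (LINT r:{a<..<b}|lborel. (g r - poly P0 r) * r ^ j) = 0)"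
    proof (intro conjI allI impI P0)
      fix j assume j: "j \<le> q - 1"
      show "(LINT r:{a<..<b}|lborel. (g r - poly P0 r) * r ^ j) = 0"
        unfolding LINT_poly_eq[OF ab g] using orth j q1 unfolding orth_def by (simp add: degree_monom_eq)
    qed
  next
    fix P assume H: "degree P \<le> q - 1 \<and> (\<forall>j\<le>q - 1. (LINT r:{a<..<b}|lborel. (g r - poly P r) * r ^ j) = 0)"
    have "orth q (P0 - P)"
    proof (rule orth_monom, intro allI impI)
      fix j assume j: "j < q"
      have h1: "PI ((G - P) * monom 1 j) = 0" using H j LINT_poly_eq[OF ab g, of P j] by simp
      have h2: "PI ((G - P0) * monom 1 j) = 0" using orth j unfolding orth_def by (simp add: degree_monom_eq)
      have "(P0 - P) * monom 1 j = (G - P) * monom 1 j - (G - P0) * monom 1 j" by (simp add: algebra_simps)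
      then show "PI ((P0 - P) * monom 1 j) = 0" using h1 h2 by (simp add: PI_diff)
    qed
    moreover have "degree (P0 - P) < q" using H P0 q1 by (meson degree_diff_le diff_less le_less_trans less_numeral_extra(1) order.strict_trans2 zero_less_one) 
    ultimately show "P = P0" using orth_unique by fastforce
  qed
  show ?thesis unfolding tproj_def[abs_def] key ..
qed

lemma decomp:
  assumes ab: "a < b" and q1: "q \<ge> 1"
    and E: "\<And>x. ab.orth a b q (E x)" "\<And>x. degree (E x) \<le> q"
  shows "\<exists>Lq C. leg a b q Lq \<and> (\<forall>x. E x = smult (C * coeff (E x) q) Lq)"
proof -
  interpret ab a b using ab by unfold_locales
  show ?thesis
  proof (cases "\<exists>x0. E x0 \<noteq> 0")
    case True
    then obtain x0 where x0: "E x0 \<noteq> 0" by blast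
    have "leg a b q (E x0)" by unfold_locales (use ab q1 E in auto)
    moreover have "\<forall>x. E x = smult ((1 / coeff (E x0) q) * coeff (E x) q) (E x0)"
      using orth_decomp[OF E(1) E(2) E(1) E(2) x0] by simp
    ultimately show ?thesis by blast
  next
    case False
    have "leg a b q 0" by unfold_locales (use ab q1 in \<open>auto simp: orth_def PI_zero\<close>)
    then show ?thesis using False by (intro exI[of _ 0] exI[of _ 0]) auto
  qed
qed

lemma setint_sum:
  fixes f :: "nat \<Rightarrow> 'a::euclidean_space \<Rightarrow> real"
  assumes "finite I" "\<And>i. i \<in> I \<Longrightarrow> set_integrable lborel A (f i)"
  shows "(LINT x:A|lborel. (\<Sum>i\<in>I. f i x)) = (\<Sum>i\<in>I. LINT x:A|lborel. f i x)"
proof -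
  have e: "(\<lambda>x. indicator A x *\<^sub>R (\<Sum>i\<in>I. f i x)) = (\<lambda>x. \<Sum>i\<in>I. indicator A x *\<^sub>R f i x)"
    by (rule ext) (rule scaleR_sum_right)
  show ?thesis unfolding set_lebesgue_integral_def e
    by (rule Bochner_Integration.integral_sum) (use assms in \<open>auto simp: set_integrable_def\<close>)
qed

theorem lemma4p13:
  fixes \<Omega> :: "'a::euclidean_space set" and Th :: "'a set set"
    and c :: "'a \<Rightarrow> real" and c_lo c_hi T :: real
    and f u v ustar :: "'a \<Rightarrow> real \<Rightarrow> real" and u0h v0h :: "'a \<Rightarrow> real"
    and tn :: "nat \<Rightarrow> real" and N p q :: nat
  assumes dim: "DIM('a) \<in> {1, 2, 3}"
    and dom: "polytopic_domain \<Omega>"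
    and mesh: "conforming_simplicial_mesh \<Omega> Th"
    and Tpos: "T > 0"
    and c_cont: "continuous_on (closure \<Omega>) c"
    and c_bnd: "0 < c_lo" "\<forall>x\<in>closure \<Omega>. c_lo < c x \<and> c x < c_hi"
    and f_reg: "L1L2 \<Omega> T f"
    and part: "time_partition tn N T"
    and pq: "p \<ge> 1" "q \<ge> 1"
    and u_sp: "u \<in> Vht \<Omega> Th p tn N q"
    and v_sp: "v \<in> Vht \<Omega> Th p tn N q"
    and eq1: "\<forall>z\<in>Wht \<Omega> Th p tn N (q - 1).
       QInt \<Omega> 0 T (\<lambda>x t. (c x)\<^sup>2 * (grad (\<lambda>y. v y t) x \<bullet> grad (\<lambda>y. z y t) x))
     - QInt \<Omega> 0 T (\<lambda>x t. (c x)\<^sup>2 * (grad (\<lambda>y. dt u y t) x \<bullet> grad (\<lambda>y. z y t) x)) = 0"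
    and eq2: "\<forall>w\<in>Wht \<Omega> Th p tn N (q - 1).
       QInt \<Omega> 0 T (\<lambda>x t. dt v x t * w x t)
     + QInt \<Omega> 0 T (\<lambda>x t. (c x)\<^sup>2 * (grad (\<lambda>y. u y t) x \<bullet> grad (\<lambda>y. w y t) x))
     = QInt \<Omega> 0 T (\<lambda>x t. f x t * w x t)"
    and init: "u0h \<in> Vh0 \<Omega> Th p" "v0h \<in> Vh0 \<Omega> Th p"
              "\<forall>x. u x 0 = u0h x" "\<forall>x. v x 0 = v0h x"
    and ustar_def: "ustar = (\<lambda>x t. u x 0 + integral {0..t} (\<lambda>s. v x s))"
  shows "\<forall>n\<in>{1..N}.
     (q > 1 \<longrightarrow> (\<forall>\<phi>. (\<forall>j\<le>q - 2. \<phi> j \<in> Vh0 \<Omega> Th p) \<longrightarrow>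
        QInt \<Omega> (tn (n - 1)) (tn n)
          (\<lambda>x t. (ustar x t - u x t) * (\<Sum>j\<le>q - 2. t ^ j * \<phi> j x)) = 0))
   \<and> esssup (restrict_space lborel {tn (n - 1)<..<tn n})
        (\<lambda>t. ereal (L2nrm \<Omega> (\<lambda>x. ustar x t - u x t)))
      \<le> ereal (sqrt (Cqstar q * (tn n - tn (n - 1)))
           * sqrt (QInt \<Omega> (tn (n - 1)) (tn n)
               (\<lambda>x t. (v x t - tproj (q - 1) (tn (n - 1)) (tn n) (\<lambda>r. v x r) t)\<^sup>2)))
   \<and> (LINT t:{tn (n - 1)<..<tn n}|lborel. L2nrm \<Omega> (\<lambda>x. ustar x t - u x t))
      \<le> (tn n - tn (n - 1)) *
        (LINT t:{tn (n - 1)<..<tn n}|lborel.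
           L2nrm \<Omega> (\<lambda>x. v x t - tproj (q - 1) (tn (n - 1)) (tn n) (\<lambda>r. v x r) t))"
proof -
  interpret spat \<Omega> Th c c_lo c_hi p using dom mesh c_cont c_bnd by unfold_locales
  have q1: "q \<ge> 1" using pq(2) .
  have P: "time_partition tn N T" using part .
  have "\<forall>n\<in>{1..N}. \<exists>\<phi>. (\<forall>j\<le>q. \<phi> j \<in> Vh0 \<Omega> Th p) \<and> (\<forall>t\<in>{tn (n - 1)..tn n}. \<forall>x. u x t = (\<Sum>j\<le>q. t ^ j * \<phi> j x))"
    using u_sp by (simp add: Vht_def)
  from bchoice[OF this] obtain \<phi>u where \<phi>u: "\<forall>n\<in>{1..N}. (\<forall>j\<le>q. \<phi>u n j \<in> Vh0 \<Omega> Th p) \<and> (\<forall>t\<in>{tn (n - 1)..tn n}. \<forall>x. u x t = (\<Sum>j\<le>q. t ^ j * \<phi>u n j x))"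
    ..
  have "\<forall>n\<in>{1..N}. \<exists>\<phi>. (\<forall>j\<le>q. \<phi> j \<in> Vh0 \<Omega> Th p) \<and> (\<forall>t\<in>{tn (n - 1)..tn n}. \<forall>x. v x t = (\<Sum>j\<le>q. t ^ j * \<phi> j x))"
    using v_sp by (simp add: Vht_def)
  from bchoice[OF this] obtain \<phi>v where \<phi>v: "\<forall>n\<in>{1..N}. (\<forall>j\<le>q. \<phi>v n j \<in> Vh0 \<Omega> Th p) \<and> (\<forall>t\<in>{tn (n - 1)..tn n}. \<forall>x. v x t = (\<Sum>j\<le>q. t ^ j * \<phi>v n j x))"
    ..
  define PU where "PU n x = mkP q (\<phi>u n) x" for n x
  define PV where "PV n x = mkP q (\<phi>v n) x" for n x
  define E where "E n x = PV n x - pderiv (PU n x)" for n x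
  have uP: "u x t = poly (PU n x) t" if "n \<in> {1..N}" "t \<in> {tn (n - 1)..tn n}" for n x t
    using \<phi>u that unfolding PU_def poly_mkP by blast
  have vP: "v x t = poly (PV n x) t" if "n \<in> {1..N}" "t \<in> {tn (n - 1)..tn n}" for n x t
    using \<phi>v that unfolding PV_def poly_mkP by blast
  have abn: "tn (n - 1) < tn n" "0 \<le> tn (n - 1)" "tn n \<le> T" if n: "n \<in> {1..N}" for n
  proof -
    show "tn (n - 1) < tn n" using part_strict[OF P, of "n - 1" n] n by auto
    show "0 \<le> tn (n - 1)" using part_mono[OF P, of 0 "n - 1"] n P by (auto simp: time_partition_def)
    show "tn n \<le> T" using part_mono[OF P, of n N] n P by (auto simp: time_partition_def)
  qed
  have orthE: "ab.orth (tn (n - 1)) (tn n) q (E n x)" if n: "n \<in> {1..N}" for n x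
  proof -
    have u1: "\<forall>j\<le>q. \<phi>u n j \<in> Vh0 \<Omega> Th p" and u2: "\<forall>t\<in>{tn (n - 1)..tn n}. \<forall>x. u x t = (\<Sum>j\<le>q. t ^ j * \<phi>u n j x)"
      using \<phi>u n by blast+
    have v1: "\<forall>j\<le>q. \<phi>v n j \<in> Vh0 \<Omega> Th p" and v2: "\<forall>t\<in>{tn (n - 1)..tn n}. \<forall>x. v x t = (\<Sum>j\<le>q. t ^ j * \<phi>v n j x)"
      using \<phi>v n by blast+
    show ?thesis unfolding E_def PU_def PV_def by (rule interval_orth[OF P n q1 u1 u2 v1 v2 eq1])
  qed
  have degE: "degree (E n x) \<le> q" for n x
    unfolding E_def PU_def PV_def using degree_mkP[of q "\<phi>v n" x] degree_mkP[of q "\<phi>u n" x]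
    by (intro degree_diff_le) (auto simp: degree_pderiv)
  have vc: "continuous_on {0..T} (v x)" for x
    by (rule vcont[OF P, of _ "\<lambda>n. PV n x"]) (use vP in auto)
  have dform: "(ustar x t - u x t) - (ustar x (tn (n - 1)) - u x (tn (n - 1))) = integral {tn (n - 1)..t} (poly (E n x))"
    if n: "n \<in> {1..N}" and t: "t \<in> {tn (n - 1)..tn n}" for n x t
  proof -
    let ?a = "tn (n - 1)"
    have a0: "0 \<le> ?a" and tT: "t \<le> T" using abn[OF n] t by auto
    have at: "?a \<le> t" using t by simp
    have i0t: "(v x) integrable_on {0..t}"
      by (rule integrable_continuous_interval, rule continuous_on_subset[OF vc]) (use tT in auto)
    have comb: "integral {0..?a} (v x) + integral {?a..t} (v x) = integral {0..t} (v x)"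
      by (rule Henstock_Kurzweil_Integration.integral_combine[OF a0 at i0t])
    have vint: "integral {?a..t} (v x) = integral {?a..t} (poly (PV n x))"
      by (rule integral_cong) (use vP[OF n] t in auto)
    have udiff: "u x t - u x ?a = integral {?a..t} (poly (pderiv (PU n x)))"
      using ftc_poly[OF at, of "PU n x"] uP[OF n, of ?a x] uP[OF n t, of x] abn[OF n] at by auto
    have Eint: "integral {?a..t} (poly (E n x)) = integral {?a..t} (poly (PV n x)) - integral {?a..t} (poly (pderiv (PU n x)))"
    proof -
      have "poly (E n x) = (\<lambda>r. poly (PV n x) r - poly (pderiv (PU n x)) r)" unfolding E_def by (auto simp: fun_eq_iff)
      then show ?thesis by (simp add: integral_diff pint)
    qed
    show ?thesis unfolding ustar_def using comb vint udiff Eint by simp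
  qed
  have PIE0: "integral {tn (n - 1)..tn n} (poly (E n x)) = 0" if n: "n \<in> {1..N}" for n x
  proof -
    interpret ab "tn (n - 1)" "tn n" using abn[OF n] by unfold_locales
    have "PI (E n x * 1) = 0" using orthE[OF n, of x] q1 unfolding orth_def by (metis degree_1 less_le_trans zero_less_one)
    then show ?thesis unfolding PI_def by simp
  qed
  have node: "ustar x (tn n) - u x (tn n) = 0" if "n \<le> N" for n x
    using that
  proof (induction n)
    case 0
    have "tn 0 = 0" using P unfolding time_partition_def by simp
    then show ?case unfolding ustar_def by simp
  next
    case (Suc n)
    have n: "Suc n \<in> {1..N}" using Suc.prems by simp
    have "(ustar x (tn (Suc n)) - u x (tn (Suc n))) - (ustar x (tn n) - u x (tn n)) = 0"
      using dform[OF n, of "tn (Suc n)" x] PIE0[OF n, of x] abn[OF n] by simp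
    then show ?case using Suc.IH Suc.prems by simp
  qed
  have diffE: "ustar x t - u x t = integral {tn (n - 1)..t} (poly (E n x))"
    if n: "n \<in> {1..N}" and t: "t \<in> {tn (n - 1)..tn n}" for n x t
    using dform[OF n t, of x] node[of "n - 1" x] n by auto
  have tpj: "v x t - tproj (q - 1) (tn (n - 1)) (tn n) (\<lambda>r. v x r) t = poly (E n x) t"
    if n: "n \<in> {1..N}" and t: "t \<in> {tn (n - 1)<..<tn n}" for n x t
  proof -
    have tp: "tproj (q - 1) (tn (n - 1)) (tn n) (\<lambda>r. v x r) = poly (pderiv (PU n x))"
    proof (rule tproj_eq[OF abn(1)[OF n] q1])
      show "\<forall>r\<in>{tn (n - 1)<..<tn n}. v x r = poly (PV n x) r" using vP[OF n] by auto
      show "degree (pderiv (PU n x)) \<le> q - 1" unfolding PU_def using degree_mkP[of q "\<phi>u n" x]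
        by (simp add: degree_pderiv)
      show "ab.orth (tn (n - 1)) (tn n) q (PV n x - pderiv (PU n x))" using orthE[OF n, of x] unfolding E_def .
    qed
    show ?thesis unfolding tp E_def using vP[OF n, of t x] t by simp
  qed
  show ?thesis
  proof
    fix n assume n: "n \<in> {1..N}"
    define a where "a = tn (n - 1)"
    define b where "b = tn n"
    have ab: "a < b" and a0: "0 \<le> a" and bT: "b \<le> T" using abn[OF n] unfolding a_def b_def by auto
    obtain Lq C where lg: "leg a b q Lq" and Ed: "\<forall>x. E n x = smult (C * coeff (E n x) q) Lq"
      using decomp[OF ab q1, of "E n"] orthE[OF n] degE unfolding a_def b_def by blast
    interpret leg a b q Lq by (rule lg)
    define \<psi> where "\<psi> x = C * coeff (E n x) q" for x
    have cE: "coeff (E n x) q = \<phi>v n q x" for x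
      unfolding E_def PV_def PU_def by (simp add: coeff_pderiv coeff_mkP)
    have \<psi>c: "continuous_on UNIV \<psi>"
    proof -
      have "\<phi>v n q \<in> Vh0 \<Omega> Th p" using \<phi>v n by blast
      then have "continuous_on UNIV (\<phi>v n q)" by (rule Vh0_cont)
      then show ?thesis unfolding \<psi>_def cE by (intro continuous_intros)
    qed
    have Epsi: "poly (E n x) t = \<psi> x * poly Lq t" for x t
      using Ed \<psi>_def by (metis poly_smult)
    define Lam where "Lam t = integral {a..t} (poly Lq)" for t
    have Lam_p: "Lam t = poly Lp t" if "t \<in> {a..b}" for t unfolding Lam_def using Lam_formula[OF that] .
    have ud: "ustar x t - u x t = \<psi> x * Lam t" if t: "t \<in> {a..b}" for x t
    proof -
      have "ustar x t - u x t = integral {a..t} (poly (E n x))"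
        using diffE[OF n, of t x] t unfolding a_def b_def by simp
      also have "poly (E n x) = (\<lambda>r. \<psi> x * poly Lq r)" using Epsi by auto
      finally show ?thesis unfolding Lam_def by simp
    qed
    have vd: "v x t - tproj (q - 1) a b (\<lambda>r. v x r) t = \<psi> x * poly Lq t" if t: "t \<in> {a<..<b}" for x t
      using tpj[OF n, of t x] t Epsi unfolding a_def b_def by simp
    define \<Psi> where "\<Psi> = (LINT x:\<Omega>|lborel. (\<psi> x)\<^sup>2)"
    have \<Psi>0: "0 \<le> \<Psi>" unfolding \<Psi>_def set_lebesgue_integral_def by (rule Bochner_Integration.integral_nonneg) simp
    have L2lin: "L2nrm \<Omega> (\<lambda>x. \<psi> x * r) = \<bar>r\<bar> * sqrt \<Psi>" for r
    proof -
      have "(LINT x:\<Omega>|lborel. (\<psi> x * r)\<^sup>2) = (LINT x:\<Omega>|lborel. r\<^sup>2 * (\<psi> x)\<^sup>2)"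
        by (simp add: power_mult_distrib mult.commute)
      also have "\<dots> = r\<^sup>2 * \<Psi>" unfolding \<Psi>_def by simp
      finally show ?thesis unfolding L2nrm_def by (simp add: real_sqrt_mult)
    qed
    have L2u: "L2nrm \<Omega> (\<lambda>x. ustar x t - u x t) = \<bar>poly Lp t\<bar> * sqrt \<Psi>" if t: "t \<in> {a<..<b}" for t
    proof -
      have "(\<lambda>x. ustar x t - u x t) = (\<lambda>x. \<psi> x * Lam t)" using ud t by auto
      then show ?thesis using L2lin Lam_p t by simp
    qed
    have L2v: "L2nrm \<Omega> (\<lambda>x. v x t - tproj (q - 1) a b (\<lambda>r. v x r) t) = \<bar>poly Lq t\<bar> * sqrt \<Psi>" if t: "t \<in> {a<..<b}" for t
    proof -
      have "(\<lambda>x. v x t - tproj (q - 1) a b (\<lambda>r. v x r) t) = (\<lambda>x. \<psi> x * poly Lq t)" using vd t by auto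
      then show ?thesis using L2lin by simp
    qed
    have Qv: "QInt \<Omega> a b (\<lambda>x t. (v x t - tproj (q - 1) a b (\<lambda>r. v x r) t)\<^sup>2) = \<Psi> * PI (Lq * Lq)"
    proof -
      have "QInt \<Omega> a b (\<lambda>x t. (v x t - tproj (q - 1) a b (\<lambda>r. v x r) t)\<^sup>2)
          = (LINT t:{a<..<b}|lborel. \<Psi> * (poly Lq t * poly Lq t))"
        unfolding QInt_def
      proof (rule set_lebesgue_integral_cong, simp, intro allI impI)
        fix t assume t: "t \<in> {a<..<b}"
        have "(LINT x:\<Omega>|lborel. (v x t - tproj (q - 1) a b (\<lambda>r. v x r) t)\<^sup>2) = (LINT x:\<Omega>|lborel. (poly Lq t)\<^sup>2 * (\<psi> x)\<^sup>2)"
          by (rule set_lebesgue_integral_cong) (use vd t opn in \<open>auto simp: power_mult_distrib\<close>)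
        also have "\<dots> = \<Psi> * (poly Lq t * poly Lq t)" unfolding \<Psi>_def by (simp add: power2_eq_square)
        finally show "(LINT x:\<Omega>|lborel. (v x t - tproj (q - 1) a b (\<lambda>r. v x r) t)\<^sup>2) = \<Psi> * (poly Lq t * poly Lq t)" .
      qed
      also have "\<dots> = integral {a..b} (\<lambda>t. \<Psi> * (poly Lq t * poly Lq t))"
        by (rule LINT_Ioo(2)) (intro continuous_intros)
      also have "\<dots> = \<Psi> * PI (Lq * Lq)"
      proof -
        have "poly (Lq * Lq) = (\<lambda>t. poly Lq t * poly Lq t)" by (auto simp: fun_eq_iff)
        then show ?thesis unfolding PI_def by simp
      qed
      finally show ?thesis .
    qed
    show "(q > 1 \<longrightarrow> (\<forall>\<phi>. (\<forall>j\<le>q - 2. \<phi> j \<in> Vh0 \<Omega> Th p) \<longrightarrow>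
        QInt \<Omega> (tn (n - 1)) (tn n)
          (\<lambda>x t. (ustar x t - u x t) * (\<Sum>j\<le>q - 2. t ^ j * \<phi> j x)) = 0))
      \<and> esssup (restrict_space lborel {tn (n - 1)<..<tn n})
        (\<lambda>t. ereal (L2nrm \<Omega> (\<lambda>x. ustar x t - u x t)))
      \<le> ereal (sqrt (Cqstar q * (tn n - tn (n - 1)))
           * sqrt (QInt \<Omega> (tn (n - 1)) (tn n)
               (\<lambda>x t. (v x t - tproj (q - 1) (tn (n - 1)) (tn n) (\<lambda>r. v x r) t)\<^sup>2)))
      \<and> (LINT t:{tn (n - 1)<..<tn n}|lborel. L2nrm \<Omega> (\<lambda>x. ustar x t - u x t))
      \<le> (tn n - tn (n - 1)) *
        (LINT t:{tn (n - 1)<..<tn n}|lborel.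
           L2nrm \<Omega> (\<lambda>x. v x t - tproj (q - 1) (tn (n - 1)) (tn n) (\<lambda>r. v x r) t))"
      unfolding a_def[symmetric] b_def[symmetric]
    proof (intro conjI impI allI)
      fix \<phi> :: "nat \<Rightarrow> 'a \<Rightarrow> real"
      assume qg: "q > 1" and \<phi>V: "\<forall>j\<le>q - 2. \<phi> j \<in> Vh0 \<Omega> Th p"
      have \<phi>c: "continuous_on UNIV (\<phi> j)" if "j \<le> q - 2" for j using \<phi>V that Vh0_cont by blast
      define NN where "NN j = (LINT x:\<Omega>|lborel. \<psi> x * \<phi> j x)" for j
      have inner: "(LINT x:\<Omega>|lborel. (ustar x t - u x t) * (\<Sum>j\<le>q - 2. t ^ j * \<phi> j x))
          = (\<Sum>j\<le>q - 2. NN j * (poly Lp t * t ^ j))" if t: "t \<in> {a<..<b}" for t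
      proof -
        have "(LINT x:\<Omega>|lborel. (ustar x t - u x t) * (\<Sum>j\<le>q - 2. t ^ j * \<phi> j x))
            = (LINT x:\<Omega>|lborel. (\<Sum>j\<le>q - 2. (Lam t * t ^ j) * (\<psi> x * \<phi> j x)))"
        proof (rule set_lebesgue_integral_cong)
          show "\<Omega> \<in> sets lborel" using opn by simp
          show "\<forall>x. x \<in> \<Omega> \<longrightarrow> (ustar x t - u x t) * (\<Sum>j\<le>q - 2. t ^ j * \<phi> j x) = (\<Sum>j\<le>q - 2. (Lam t * t ^ j) * (\<psi> x * \<phi> j x))"
            using ud t by (auto simp: sum_distrib_left mult_ac)
        qed
        also have "\<dots> = (\<Sum>j\<le>q - 2. LINT x:\<Omega>|lborel. (Lam t * t ^ j) * (\<psi> x * \<phi> j x))"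
          by (rule setint_sum) (auto intro!: setint_cont[OF bdd opn] continuous_intros \<psi>c \<phi>c)
        also have "\<dots> = (\<Sum>j\<le>q - 2. (Lam t * t ^ j) * NN j)"
          unfolding NN_def set_integral_mult_right ..
        also have "\<dots> = (\<Sum>j\<le>q - 2. NN j * (poly Lp t * t ^ j))"
          using Lam_p t by (simp add: mult_ac)
        finally show ?thesis .
      qed
      have "QInt \<Omega> a b (\<lambda>x t. (ustar x t - u x t) * (\<Sum>j\<le>q - 2. t ^ j * \<phi> j x))
          = (LINT t:{a<..<b}|lborel. (\<Sum>j\<le>q - 2. NN j * (poly Lp t * t ^ j)))"
        unfolding QInt_def by (rule set_lebesgue_integral_cong) (auto simp: inner)
      also have "\<dots> = integral {a..b} (\<lambda>t. \<Sum>j\<le>q - 2. NN j * (poly Lp t * t ^ j))"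
        by (rule LINT_Ioo(2)) (intro continuous_intros)
      also have "\<dots> = (\<Sum>j\<le>q - 2. NN j * integral {a..b} (\<lambda>t. poly Lp t * t ^ j))"
        by (subst integral_sum) (auto intro!: integrable_continuous_interval continuous_intros)
      also have "\<dots> = 0"
      proof (rule sum.neutral, rule ballI)
        fix j assume j: "j \<in> {..q - 2}"
        have "integral {a..b} (\<lambda>t. poly Lp t * t ^ j) = integral {a..b} (\<lambda>t. integral {a..t} (poly Lq) * t ^ j)"
          by (rule integral_cong) (use Lam_p in \<open>auto simp: Lam_def\<close>)
        also have "\<dots> = 0" by (rule Lam_orth) (use j qg in auto)
        finally show "NN j * integral {a..b} (\<lambda>t. poly Lp t * t ^ j) = 0" by simp
      qed
      finally show "QInt \<Omega> a b (\<lambda>x t. (ustar x t - u x t) * (\<Sum>j\<le>q - 2. t ^ j * \<phi> j x)) = 0" .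
    next
      show "esssup (restrict_space lborel {a<..<b}) (\<lambda>t. ereal (L2nrm \<Omega> (\<lambda>x. ustar x t - u x t)))
        \<le> ereal (sqrt (Cqstar q * (b - a)) * sqrt (QInt \<Omega> a b (\<lambda>x t. (v x t - tproj (q - 1) a b (\<lambda>r. v x r) t)\<^sup>2)))"
      proof -
        have gm: "(\<lambda>t. \<bar>poly Lp t\<bar> * sqrt \<Psi>) \<in> borel_measurable borel"
          by (intro borel_measurable_continuous_onI continuous_intros)
        have g: "(\<lambda>t. ereal (\<bar>poly Lp t\<bar> * sqrt \<Psi>)) \<in> borel_measurable (restrict_space lborel {a<..<b})"
          by (rule measurable_restrict_space1) (use gm in measurable)
        have meas: "(\<lambda>t. ereal (L2nrm \<Omega> (\<lambda>x. ustar x t - u x t))) \<in> borel_measurable (restrict_space lborel {a<..<b})"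
          by (rule measurable_cong[THEN iffD2, OF _ g]) (simp add: space_restrict_space L2u)
        have bnd: "\<bar>poly Lp t\<bar> * sqrt \<Psi> \<le> sqrt (Cqstar q * (b - a)) * sqrt (\<Psi> * PI (Lq * Lq))" if t: "t \<in> {a..b}" for t
        proof -
          have "(poly Lp t)\<^sup>2 \<le> Cqstar q * (b - a) * PI (Lq * Lq)" using Lam_sq[OF t] Lam_p[OF t] unfolding Lam_def by simp
          then have "sqrt ((poly Lp t)\<^sup>2) \<le> sqrt (Cqstar q * (b - a) * PI (Lq * Lq))" by (rule real_sqrt_le_mono)
          then have "\<bar>poly Lp t\<bar> \<le> sqrt (Cqstar q * (b - a)) * sqrt (PI (Lq * Lq))" by (simp add: real_sqrt_mult)
          then have "\<bar>poly Lp t\<bar> * sqrt \<Psi> \<le> sqrt (Cqstar q * (b - a)) * sqrt (PI (Lq * Lq)) * sqrt \<Psi>"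
            by (rule mult_right_mono) (use \<Psi>0 in simp)
          also have "\<dots> = sqrt (Cqstar q * (b - a)) * sqrt (\<Psi> * PI (Lq * Lq))" by (simp add: real_sqrt_mult)
          finally show ?thesis .
        qed
        show ?thesis unfolding Qv
          by (rule esssup_I[OF meas], rule AE_I2) (auto simp: space_restrict_space L2u bnd)
      qed
    next
      show "(LINT t:{a<..<b}|lborel. L2nrm \<Omega> (\<lambda>x. ustar x t - u x t))
        \<le> (b - a) * (LINT t:{a<..<b}|lborel. L2nrm \<Omega> (\<lambda>x. v x t - tproj (q - 1) a b (\<lambda>r. v x r) t))"
      proof -
        have lhs: "(LINT t:{a<..<b}|lborel. L2nrm \<Omega> (\<lambda>x. ustar x t - u x t)) = integral {a..b} (\<lambda>t. \<bar>poly Lp t\<bar> * sqrt \<Psi>)"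
        proof -
          have "(LINT t:{a<..<b}|lborel. L2nrm \<Omega> (\<lambda>x. ustar x t - u x t)) = (LINT t:{a<..<b}|lborel. \<bar>poly Lp t\<bar> * sqrt \<Psi>)"
            by (rule set_lebesgue_integral_cong) (auto simp: L2u)
          also have "\<dots> = integral {a..b} (\<lambda>t. \<bar>poly Lp t\<bar> * sqrt \<Psi>)"
            by (rule LINT_Ioo(2)) (intro continuous_intros)
          finally show ?thesis .
        qed
        have rhs: "(LINT t:{a<..<b}|lborel. L2nrm \<Omega> (\<lambda>x. v x t - tproj (q - 1) a b (\<lambda>r. v x r) t)) = integral {a..b} (\<lambda>t. \<bar>poly Lq t\<bar> * sqrt \<Psi>)"
        proof -
          have "(LINT t:{a<..<b}|lborel. L2nrm \<Omega> (\<lambda>x. v x t - tproj (q - 1) a b (\<lambda>r. v x r) t)) = (LINT t:{a<..<b}|lborel. \<bar>poly Lq t\<bar> * sqrt \<Psi>)"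
            by (rule set_lebesgue_integral_cong) (simp, use L2v in blast)
          also have "\<dots> = integral {a..b} (\<lambda>t. \<bar>poly Lq t\<bar> * sqrt \<Psi>)"
            by (rule LINT_Ioo(2)) (intro continuous_intros)
          finally show ?thesis .
        qed
        define J where "J = integral {a..b} (\<lambda>s. \<bar>poly Lq s\<bar>)"
        have "integral {a..b} (\<lambda>t. \<bar>poly Lp t\<bar> * sqrt \<Psi>) \<le> integral {a..b} (\<lambda>t. J * sqrt \<Psi>)"
        proof (rule integral_le)
          show "(\<lambda>t. \<bar>poly Lp t\<bar> * sqrt \<Psi>) integrable_on {a..b}"
            by (intro integrable_continuous_interval continuous_intros)
          show "(\<lambda>t. J * sqrt \<Psi>) integrable_on {a..b}" by (rule integrable_const_ivl)
          fix t assume t: "t \<in> {a..b}"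
          have "\<bar>poly Lp t\<bar> \<le> J" using Lam_abs[OF t] Lam_p[OF t] unfolding J_def Lam_def by simp
          then show "\<bar>poly Lp t\<bar> * sqrt \<Psi> \<le> J * sqrt \<Psi>" by (rule mult_right_mono) (use \<Psi>0 in simp)
        qed
        also have "\<dots> = (b - a) * (J * sqrt \<Psi>)" using ab by simp
        also have "\<dots> = (b - a) * integral {a..b} (\<lambda>t. \<bar>poly Lq t\<bar> * sqrt \<Psi>)" unfolding J_def by simp
        finally show ?thesis unfolding lhs rhs .
      qed
    qed
  qed
qed

end
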